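(* The dynamics on $\mathbb{R}^{|S|}\times\mathbb{R}^{|S|\times|A|}_{>0}$ $$\frac{dv_{s'}}{dt}=-\Big(v_{s'}-\frac1\alpha\sum_{s,a}K_{ass'}u_{sa}\Big),\ s'\in S,\qquad \frac{du_{sa}}{dt}=-u_{sa}\Big(\log\frac{u_{sa}}{\tilde u_s}-\frac1\tau\Big(r_{sa}-\sum_{s'}K_{ass'}v_{s'}\Big)\Big),\ (s,a)\in S\times A,$$ converges to $(v^*,u^* )$ at rate $O(e^{-ct})$ for some $c>0$, where $(v^*,u^* )$ is the unique saddle point of $\min_v\max_u E(v,u)$.
   Context: Finite MDP: state space $S$, action space $A$, transition probabilities $P_{ass'}$ (with $\sum_{s'}P_{ass'}=1$), rewards $r_{sa}\ge0$, discount $\gamma\in(0,1)$, regularization $\tau>0$, and $\alpha>0$. $K_{ass'}=\delta_{ss'}-\gamma P_{ass'}$, $\tilde u_s=\sum_a u_{sa}$, and $E(v,u)=\frac{\alpha}{2}\sum_s v_s^2+\sum_{s,a}u_{sa}(r_{sa}-\sum_{s'}K_{ass'}v_{s'})-\tau\sum_{s,a}u_{sa}\log(u_{sa}/\tilde u_s)$. This min-max problem has a unique saddle point $(v^*,u^* )$. *)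

theory Defs
  imports "HOL-Analysis.Analysis"
begin

text \<open>P a s s' is the transition probability P_{ass'}, r s a the reward r_{sa},
  v :: 'S \<Rightarrow> real, u :: 'S \<Rightarrow> 'A \<Rightarrow> real (u s a = u_{sa}).\<close>

definition Kmat :: "real \<Rightarrow> ('A \<Rightarrow> 'S \<Rightarrow> 'S \<Rightarrow> real) \<Rightarrow> 'A \<Rightarrow> 'S \<Rightarrow> 'S \<Rightarrow> real" where
  "Kmat \<gamma> P a s s' = (if s = s' then 1 else 0) - \<gamma> * P a s s'"

definition utilde :: "('S \<Rightarrow> 'A::finite \<Rightarrow> real) \<Rightarrow> 'S \<Rightarrow> real" where
  "utilde u s = (\<Sum>a\<in>UNIV. u s a)"

definition Efun :: "real \<Rightarrow> real \<Rightarrow> real \<Rightarrow> ('A::finite \<Rightarrow> 'S::finite \<Rightarrow> 'S \<Rightarrow> real)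
    \<Rightarrow> ('S \<Rightarrow> 'A \<Rightarrow> real) \<Rightarrow> ('S \<Rightarrow> real) \<Rightarrow> ('S \<Rightarrow> 'A \<Rightarrow> real) \<Rightarrow> real" where
  "Efun \<alpha> \<tau> \<gamma> P r v u =
     \<alpha> / 2 * (\<Sum>s\<in>UNIV. (v s)\<^sup>2)
     + (\<Sum>s\<in>UNIV. \<Sum>a\<in>UNIV. u s a * (r s a - (\<Sum>s'\<in>UNIV. Kmat \<gamma> P a s s' * v s')))
     - \<tau> * (\<Sum>s\<in>UNIV. \<Sum>a\<in>UNIV. u s a * ln (u s a / utilde u s))"

definition is_saddle :: "real \<Rightarrow> real \<Rightarrow> real \<Rightarrow> ('A::finite \<Rightarrow> 'S::finite \<Rightarrow> 'S \<Rightarrow> real)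
    \<Rightarrow> ('S \<Rightarrow> 'A \<Rightarrow> real) \<Rightarrow> ('S \<Rightarrow> real) \<Rightarrow> ('S \<Rightarrow> 'A \<Rightarrow> real) \<Rightarrow> bool" where
  "is_saddle \<alpha> \<tau> \<gamma> P r vs us \<longleftrightarrow>
     (\<forall>s a. us s a > 0) \<and>
     (\<forall>u. (\<forall>s a. u s a > 0) \<longrightarrow> Efun \<alpha> \<tau> \<gamma> P r vs u \<le> Efun \<alpha> \<tau> \<gamma> P r vs us) \<and>
     (\<forall>v. Efun \<alpha> \<tau> \<gamma> P r vs us \<le> Efun \<alpha> \<tau> \<gamma> P r v us)"

end

theory Submission
  imports Defs
begin

lemma mono_within0:
  fixes f f' :: "real \<Rightarrow> real"
  assumes d: "\<And>t. t \<ge> 0 \<Longrightarrow> (f has_real_derivative f' t) (at t within {0..})"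
    and n: "\<And>t. t \<ge> 0 \<Longrightarrow> f' t \<le> 0" and "0 \<le> a" "a \<le> b"
  shows "f b \<le> f a"
proof (rule DERIV_nonpos_imp_decreasing_open[OF \<open>a \<le> b\<close>])
  fix t assume "a < t" "t < b"
  then have "t \<in> interior {0::real..}" using \<open>0 \<le> a\<close> by simp
  then have "(f has_real_derivative f' t) (at t)"
    using d[of t] \<open>a < t\<close> \<open>0 \<le> a\<close> at_within_interior[of t "{0..}"] by auto
  then show "\<exists>y. (f has_real_derivative y) (at t) \<and> y \<le> 0" using n[of t] \<open>a < t\<close> \<open>0 \<le> a\<close> by auto
next
  have "\<forall>t\<in>{a..b}. continuous (at t within {a..b}) f"
  proof
    fix t assume t: "t \<in> {a..b}"
    then have "continuous (at t within {0..}) f" using d[of t] \<open>0 \<le> a\<close>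
      using DERIV_continuous by auto
    then show "continuous (at t within {a..b}) f"
      by (rule continuous_within_subset) (use \<open>0 \<le> a\<close> in auto)
  qed
  then show "continuous_on {a..b} f" using continuous_on_eq_continuous_within by blast
qed

lemma KL_lower:
  fixes p q :: "'a \<Rightarrow> real"
  assumes fin: "finite I" and pp: "\<And>i. i \<in> I \<Longrightarrow> p i > 0" and qp: "\<And>i. i \<in> I \<Longrightarrow> q i > 0"
    and ps: "(\<Sum>i\<in>I. p i) = 1" and qs: "(\<Sum>i\<in>I. q i) = 1"
  shows "(\<Sum>i\<in>I. (p i - q i)\<^sup>2) / 4 \<le> (\<Sum>i\<in>I. p i * (ln (p i) - ln (q i)))"
proof -
  have p1: "p i \<le> 1" if "i \<in> I" for i
    using member_le_sum[of i I p] pp qp that fin ps by (simp add: less_imp_le)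
  have q1: "q i \<le> 1" if "i \<in> I" for i
    using member_le_sum[of i I q] qp that fin qs by (simp add: less_imp_le)
  have pw: "(p i - q i)\<^sup>2 / 4 + (p i - q i) \<le> p i * (ln (p i) - ln (q i))" if i: "i \<in> I" for i
  proof -
    define a where "a = sqrt (p i)"
    define b where "b = sqrt (q i)"
    have a0: "a > 0" "b > 0" using pp[OF i] qp[OF i] by (auto simp: a_def b_def)
    have pa: "p i = a\<^sup>2" "q i = b\<^sup>2" using pp[OF i] qp[OF i] by (auto simp: a_def b_def)
    have a1: "a \<le> 1" "b \<le> 1" using p1[OF i] q1[OF i] by (auto simp: a_def b_def)
    have "ln (b / a) \<le> b / a - 1" using a0 by (intro ln_le_minus_one) auto
    moreover have "ln (p i) - ln (q i) = - 2 * ln (b / a)"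
      using a0 by (simp add: pa ln_div ln_mult power2_eq_square)
    ultimately have "p i * (ln (p i) - ln (q i)) \<ge> a\<^sup>2 * (- 2 * (b / a - 1))"
    proof -
      assume h1: "ln (b / a) \<le> b / a - 1" and h2: "ln (p i) - ln (q i) = - 2 * ln (b / a)"
      have "a\<^sup>2 * (- 2 * (b / a - 1)) \<le> a\<^sup>2 * (- 2 * ln (b / a))"
        by (rule mult_left_mono) (use h1 in auto)
      then show ?thesis using h2 pa by simp
    qed
    also have "a\<^sup>2 * (- 2 * (b / a - 1)) = 2 * a\<^sup>2 - 2 * a * b"
      using a0 by (simp add: power2_eq_square field_simps)
    finally have 1: "2 * a\<^sup>2 - 2 * a * b \<le> p i * (ln (p i) - ln (q i))" .
    have "(a + b)\<^sup>2 \<le> 2\<^sup>2" using a1 a0 by (intro power_mono) auto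
    then have "(a\<^sup>2 - b\<^sup>2)\<^sup>2 \<le> 4 * (a - b)\<^sup>2"
    proof -
      have "(a\<^sup>2 - b\<^sup>2)\<^sup>2 = (a - b)\<^sup>2 * (a + b)\<^sup>2" by (simp add: power2_eq_square algebra_simps)
      also have "\<dots> \<le> (a - b)\<^sup>2 * 4" using \<open>(a + b)\<^sup>2 \<le> 2\<^sup>2\<close> by (intro mult_left_mono) auto
      finally show ?thesis by simp
    qed
    then have "(p i - q i)\<^sup>2 / 4 \<le> (a - b)\<^sup>2" using pa by simp
    moreover have "(a - b)\<^sup>2 + (p i - q i) = 2 * a\<^sup>2 - 2 * a * b" using pa by (simp add: power2_eq_square algebra_simps)
    ultimately show ?thesis using 1 by linarith
  qed
  have "(\<Sum>i\<in>I. (p i - q i)\<^sup>2) / 4 = (\<Sum>i\<in>I. (p i - q i)\<^sup>2 / 4 + (p i - q i))"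
    using ps qs by (simp add: sum.distrib sum_subtractf sum_divide_distrib)
  also have "\<dots> \<le> (\<Sum>i\<in>I. p i * (ln (p i) - ln (q i)))"
    by (rule sum_mono) (rule pw)
  finally show ?thesis .
qed

definition hf :: "real \<Rightarrow> real \<Rightarrow> real" where
  "hf z w = z - w - w * (ln z - ln w)"

lemma hf_sq: assumes "z > 0" "w > 0" shows "(sqrt z - sqrt w)\<^sup>2 \<le> hf z w"
proof -
  define a where "a = sqrt z"
  define b where "b = sqrt w"
  have a0: "a > 0" "b > 0" using assms by (auto simp: a_def b_def)
  have pa: "z = a\<^sup>2" "w = b\<^sup>2" using assms by (auto simp: a_def b_def)
  have "ln (a / b) \<le> a / b - 1" using a0 by (intro ln_le_minus_one) auto
  moreover have "ln z - ln w = 2 * ln (a / b)"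
    using a0 by (simp add: pa ln_div ln_mult power2_eq_square)
  ultimately have "w * (ln z - ln w) \<le> b\<^sup>2 * (2 * (a / b - 1))"
    using a0 pa by (simp add: mult_left_mono)
  also have "\<dots> = 2 * a * b - 2 * b\<^sup>2" using a0 by (simp add: power2_eq_square field_simps)
  finally show ?thesis unfolding hf_def a_def[symmetric] b_def[symmetric] using pa
    by (simp add: power2_eq_square algebra_simps)
qed

lemma hf_nonneg: assumes "z > 0" "w > 0" shows "0 \<le> hf z w"
  using hf_sq[OF assms] by (meson order_trans zero_le_power2)

lemma hf_lower: assumes "z > 0" "w > 0" "z \<le> M" "w \<le> M"
  shows "(z - w)\<^sup>2 \<le> 4 * M * hf z w"
proof -
  define a where "a = sqrt z"
  define b where "b = sqrt w"
  have a0: "a > 0" "b > 0" using assms by (auto simp: a_def b_def)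
  have pa: "z = a\<^sup>2" "w = b\<^sup>2" using assms by (auto simp: a_def b_def)
  have "(a + b)\<^sup>2 = 2 * (a\<^sup>2 + b\<^sup>2) - (a - b)\<^sup>2" by (simp add: power2_eq_square algebra_simps)
  then have "(a + b)\<^sup>2 \<le> 2 * (a\<^sup>2 + b\<^sup>2)" using zero_le_power2[of "a - b"] by linarith
  also have "\<dots> \<le> 4 * M" using assms pa by simp
  finally have ab: "(a + b)\<^sup>2 \<le> 4 * M" .
  have "(z - w)\<^sup>2 = (a - b)\<^sup>2 * (a + b)\<^sup>2" using pa by (simp add: power2_eq_square algebra_simps)
  also have "\<dots> \<le> hf z w * (4 * M)"
    using hf_sq[OF assms(1,2)] hf_nonneg[OF assms(1,2)] ab unfolding a_def b_def
    by (intro mult_mono) auto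
  finally show ?thesis by (simp add: mult.commute)
qed

lemma hf_upper: assumes "z > 0" "w > 0" shows "hf z w \<le> (z - w)\<^sup>2 / z"
proof -
  have "ln (w / z) \<le> w / z - 1" using assms by (intro ln_le_minus_one) auto
  then have "w * (ln w - ln z) \<le> w * (w / z - 1)"
    using assms by (intro mult_left_mono) (auto simp: ln_div)
  then have "hf z w \<le> z - w + w * (w / z - 1)" unfolding hf_def by (simp add: algebra_simps)
  also have "\<dots> = (z - w)\<^sup>2 / z" using assms by (simp add: field_simps power2_eq_square)
  finally show ?thesis .
qed

lemma hf_bound_above: assumes "z > 0" "w > 0" "hf z w \<le> B"
  shows "z \<le> (sqrt w + sqrt B)\<^sup>2"
proof -
  have B0: "B \<ge> 0" using hf_nonneg[of z w] assms by linarith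
  have "(sqrt z - sqrt w)\<^sup>2 \<le> B" using hf_sq[of z w] assms B0 by simp
  then have "sqrt ((sqrt z - sqrt w)\<^sup>2) \<le> sqrt B" by (rule real_sqrt_le_mono)
  then have "\<bar>sqrt z - sqrt w\<bar> \<le> sqrt B" by simp
  then have "sqrt z \<le> sqrt w + sqrt B" by linarith
  then have "(sqrt z)\<^sup>2 \<le> (sqrt w + sqrt B)\<^sup>2" using assms by (intro power_mono) auto
  then show ?thesis using assms by simp
qed

lemma hf_bound_below: assumes "z > 0" "w > 0" "hf z w \<le> B"
  shows "w * exp (- (B + w) / w) \<le> z"
proof -
  have "z - w - w * (ln z - ln w) \<le> B" using assms unfolding hf_def by simp
  then have "w * (ln w - ln z) \<le> B + w" using assms by (simp add: algebra_simps)
  then have "ln w - ln z \<le> (B + w) / w" using assms by (simp add: field_simps)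
  then have "ln (w / z) \<le> (B + w) / w" using assms by (simp add: ln_div)
  then have "exp (ln (w / z)) \<le> exp ((B + w) / w)" by simp
  then have "w / z \<le> exp ((B + w) / w)" using assms by simp
  then have "w \<le> z * exp ((B + w) / w)" using assms by (simp add: field_simps)
  have e: "exp (- (B + w) / w) * exp ((B + w) / w) = 1" by (simp add: exp_add[symmetric] add_divide_distrib[symmetric])
  have "w * exp (- (B + w) / w) \<le> z * exp ((B + w) / w) * exp (- (B + w) / w)"
    using \<open>w \<le> z * exp ((B + w) / w)\<close> by (intro mult_right_mono) auto
  also have "\<dots> = z" using e by (simp add: mult.assoc mult.commute)
  finally show ?thesis .
qed

lemma ln_lip: fixes a b m :: real assumes "a \<ge> m" "b \<ge> m" "m > 0"
  shows "\<bar>ln a - ln b\<bar> \<le> \<bar>a - b\<bar> / m"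
proof -
  have a0: "a > 0" using assms by linarith
  have b0: "b > 0" using assms by linarith
  note a0 = a0 b0
  have 1: "ln (a / b) \<le> a / b - 1" using a0 by (intro ln_le_minus_one) auto
  have 2: "ln (b / a) \<le> b / a - 1" using a0 by (intro ln_le_minus_one) auto
  have "ln a - ln b \<le> (a - b) / b" using 1 a0 by (simp add: ln_div field_simps)
  also have "\<dots> \<le> \<bar>a - b\<bar> / m" using assms a0 by (intro frac_le) auto
  finally have x: "ln a - ln b \<le> \<bar>a - b\<bar> / m" .
  have "ln b - ln a \<le> (b - a) / a" using 2 a0 by (simp add: ln_div field_simps)
  also have "\<dots> \<le> \<bar>a - b\<bar> / m" using assms a0 by (intro frac_le) auto
  finally have y: "ln b - ln a \<le> \<bar>a - b\<bar> / m" .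
  show ?thesis using x y by linarith
qed

lemma fin_lower2:
  fixes f :: "'S::finite \<Rightarrow> 'A::finite \<Rightarrow> real"
  assumes "\<And>s a. f s a > 0" shows "\<exists>m>0. \<forall>s a. m \<le> f s a"
proof -
  define m where "m = Min ((\<lambda>(s,a). f s a) ` UNIV)"
  have "m > 0" unfolding m_def using assms by (subst Min_gr_iff) auto
  moreover have "m \<le> f s a" for s a unfolding m_def by (rule Min_le) auto
  ultimately show ?thesis by blast
qed

lemma fin_upper2:
  fixes f :: "'S::finite \<Rightarrow> 'A::finite \<Rightarrow> real"
  shows "\<exists>M. \<forall>s a. f s a \<le> M"
proof -
  define M where "M = Max ((\<lambda>(s,a). f s a) ` UNIV)"
  have "f s a \<le> M" for s a unfolding M_def by (rule Max_ge) auto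
  then show ?thesis by blast
qed

lemma fin_lower1:
  fixes f :: "'S::finite \<Rightarrow> real"
  assumes "\<And>s. f s > 0" shows "\<exists>m>0. \<forall>s. m \<le> f s"
proof -
  define m where "m = Min (f ` UNIV)"
  have "m > 0" unfolding m_def using assms by (subst Min_gr_iff) auto
  moreover have "m \<le> f s" for s unfolding m_def by (rule Min_le) auto
  ultimately show ?thesis by blast
qed

lemma CS2:
  fixes k y :: "'S::finite \<Rightarrow> 'A::finite \<Rightarrow> real"
  shows "(\<Sum>s\<in>UNIV. \<Sum>a\<in>UNIV. k s a * y s a)\<^sup>2 \<le> (\<Sum>s\<in>UNIV. \<Sum>a\<in>UNIV. (k s a)\<^sup>2) * (\<Sum>s\<in>UNIV. \<Sum>a\<in>UNIV. (y s a)\<^sup>2)"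
proof -
  have e: "(\<Sum>s\<in>UNIV. \<Sum>a\<in>UNIV. g s a) = (\<Sum>p\<in>UNIV. g (fst p) (snd p))" for g :: "'S \<Rightarrow> 'A \<Rightarrow> real"
    by (simp add: sum.cartesian_product UNIV_Times_UNIV[symmetric] case_prod_beta del: UNIV_Times_UNIV)
  show ?thesis unfolding e by (rule Cauchy_Schwarz_ineq_sum)
qed

lemma L1_sq2:
  fixes y :: "'S::finite \<Rightarrow> 'A::finite \<Rightarrow> real"
  shows "(\<Sum>s\<in>UNIV. \<Sum>a\<in>UNIV. \<bar>y s a\<bar>)\<^sup>2 \<le> real (CARD('S) * CARD('A)) * (\<Sum>s\<in>UNIV. \<Sum>a\<in>UNIV. (y s a)\<^sup>2)"
proof -
  have e: "(\<Sum>s\<in>UNIV. \<Sum>a\<in>UNIV. g s a) = (\<Sum>p\<in>UNIV. g (fst p) (snd p))" for g :: "'S \<Rightarrow> 'A \<Rightarrow> real"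
    by (simp add: sum.cartesian_product UNIV_Times_UNIV[symmetric] case_prod_beta del: UNIV_Times_UNIV)
  have "(\<Sum>p\<in>(UNIV::('S\<times>'A) set). \<bar>y (fst p) (snd p)\<bar>)\<^sup>2 \<le> (\<Sum>p\<in>UNIV. \<bar>y (fst p) (snd p)\<bar>\<^sup>2) * card (UNIV::('S\<times>'A) set)"
    by (rule sum_squared_le_sum_of_squares)
  then show ?thesis unfolding e by (simp add: card_cartesian_product UNIV_Times_UNIV[symmetric] mult.commute del: UNIV_Times_UNIV)
qed

lemma L1_sq1:
  fixes x :: "'S::finite \<Rightarrow> real"
  shows "(\<Sum>s\<in>UNIV. \<bar>x s\<bar>)\<^sup>2 \<le> real CARD('S) * (\<Sum>s\<in>UNIV. (x s)\<^sup>2)"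
  using sum_squared_le_sum_of_squares[of "\<lambda>s. \<bar>x s\<bar>" UNIV] by (simp add: mult.commute)

lemma young: fixes a b c :: real assumes "c > 0" shows "2 * a * b \<le> c * a\<^sup>2 + b\<^sup>2 / c"
proof -
  have "0 \<le> (c * a - b)\<^sup>2 / c" using assms by simp
  also have "\<dots> = c * a\<^sup>2 + b\<^sup>2 / c - 2 * a * b" using assms by (simp add: power2_eq_square field_simps)
  finally show ?thesis by simp
qed

locale flow =
  fixes P :: "'A::finite \<Rightarrow> 'S::finite \<Rightarrow> 'S \<Rightarrow> real"
    and r :: "'S \<Rightarrow> 'A \<Rightarrow> real"
    and \<gamma> \<tau> \<alpha> :: real
    and vs :: "'S \<Rightarrow> real" and us :: "'S \<Rightarrow> 'A \<Rightarrow> real"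
    and v :: "real \<Rightarrow> 'S \<Rightarrow> real" and u :: "real \<Rightarrow> 'S \<Rightarrow> 'A \<Rightarrow> real"
  assumes P_nonneg: "\<forall>a s s'. P a s s' \<ge> 0"
    and P_stoch: "\<forall>a s. (\<Sum>s'\<in>UNIV. P a s s') = 1"
    and gamma0: "0 < \<gamma>" and gamma1: "\<gamma> < 1"
    and tau: "\<tau> > 0"
    and alpha: "\<alpha> > 0"
    and saddle: "is_saddle \<alpha> \<tau> \<gamma> P r vs us"
    and u_pos: "\<forall>t\<ge>0. \<forall>s a. u t s a > 0"
    and v_ode: "\<forall>t\<ge>0. \<forall>s'. ((\<lambda>t. v t s') has_real_derivative
          (- (v t s' - (1 / \<alpha>) * (\<Sum>s\<in>UNIV. \<Sum>a\<in>UNIV. Kmat \<gamma> P a s s' * u t s a))))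
          (at t within {0..})"
    and u_ode: "\<forall>t\<ge>0. \<forall>s a. ((\<lambda>t. u t s a) has_real_derivative
          (- u t s a * (ln (u t s a / utilde (u t) s)
              - (1 / \<tau>) * (r s a - (\<Sum>s'\<in>UNIV. Kmat \<gamma> P a s s' * v t s')))))
          (at t within {0..})"
begin

abbreviation "K \<equiv> Kmat \<gamma> P"
abbreviation "E \<equiv> Efun \<alpha> \<tau> \<gamma> P r"

definition Qs :: "'S \<Rightarrow> 'A \<Rightarrow> real" where "Qs s a = r s a - (\<Sum>s'\<in>UNIV. K a s s' * vs s')"

definition rowf :: "('A \<Rightarrow> real) \<Rightarrow> 'S \<Rightarrow> real" where
  "rowf w s = (\<Sum>a\<in>UNIV. w a * Qs s a) - \<tau> * (\<Sum>a\<in>UNIV. w a * ln (w a / (\<Sum>b\<in>UNIV. w b)))"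

lemma us_pos: "us s a > 0" using saddle unfolding is_saddle_def by auto

lemma sad_v: "\<alpha> * vs j = (\<Sum>s\<in>UNIV. \<Sum>a\<in>UNIV. K a s j * us s a)"
proof -
  define L where "L = \<alpha> * vs j - (\<Sum>s\<in>UNIV. \<Sum>a\<in>UNIV. K a s j * us s a)"
  have key: "0 \<le> c * L + \<alpha> / 2 * c\<^sup>2" for c
  proof -
    define w where "w = (\<lambda>i. vs i + (if i = j then c else 0))"
    have "E vs us \<le> E w us" using saddle unfolding is_saddle_def by blast
    moreover have "E w us - E vs us = c * L + \<alpha> / 2 * c\<^sup>2"
    proof -
      have s1: "(\<Sum>i\<in>UNIV. (w i)\<^sup>2) = (\<Sum>i\<in>UNIV. (vs i)\<^sup>2) + 2 * c * vs j + c\<^sup>2"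
      proof -
        have "(\<Sum>i\<in>UNIV. (w i)\<^sup>2) = (\<Sum>i\<in>UNIV. (vs i)\<^sup>2 + (if i = j then 2 * c * vs j + c\<^sup>2 else 0))"
          by (rule sum.cong) (auto simp: w_def power2_eq_square algebra_simps)
        then show ?thesis by (simp add: sum.distrib)
      qed
      have s2: "(\<Sum>s'\<in>UNIV. K a s s' * w s') = (\<Sum>s'\<in>UNIV. K a s s' * vs s') + c * K a s j" for a s
      proof -
        have "(\<Sum>s'\<in>UNIV. K a s s' * w s') = (\<Sum>s'\<in>UNIV. K a s s' * vs s' + (if s' = j then c * K a s j else 0))"
          by (rule sum.cong) (auto simp: w_def algebra_simps)
        then show ?thesis by (simp add: sum.distrib)
      qed
      have "E w us - E vs us = \<alpha> / 2 * (2 * c * vs j + c\<^sup>2)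
          - (\<Sum>s\<in>UNIV. \<Sum>a\<in>UNIV. us s a * (c * K a s j))"
        unfolding Efun_def s1 s2
        by (simp add: algebra_simps sum_subtractf sum.distrib)
      also have "\<dots> = c * L + \<alpha> / 2 * c\<^sup>2"
        unfolding L_def by (simp add: algebra_simps sum_distrib_left power2_eq_square)
      finally show ?thesis .
    qed
    ultimately show ?thesis by simp
  qed
  have "0 \<le> (- L / \<alpha>) * L + \<alpha> / 2 * (- L / \<alpha>)\<^sup>2" by (rule key)
  also have "\<dots> = - L\<^sup>2 / (2 * \<alpha>)" using alpha by (simp add: power2_eq_square field_simps)
  finally have "L\<^sup>2 \<le> 0" using alpha by (simp add: divide_le_0_iff)
  then have "L = 0" by simp
  then show ?thesis unfolding L_def by simp
qed

lemma E_row: "E vs w = \<alpha> / 2 * (\<Sum>s\<in>UNIV. (vs s)\<^sup>2) + (\<Sum>s\<in>UNIV. rowf (w s) s)"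
  unfolding Efun_def rowf_def utilde_def Qs_def
  by (simp add: sum_subtractf sum_distrib_left algebra_simps sum.distrib)

lemma row_le: assumes "\<forall>a. q a > 0" shows "rowf q s \<le> rowf (us s) s"
proof -
  define w where "w = us(s := q)"
  have "\<forall>s a. w s a > 0" using assms us_pos by (auto simp: w_def)
  then have "E vs w \<le> E vs us" using saddle unfolding is_saddle_def by blast
  then have le: "(\<Sum>s'\<in>UNIV. rowf (w s') s') \<le> (\<Sum>s'\<in>UNIV. rowf (us s') s')" by (simp add: E_row)
  have d: "rowf (w s') s' - rowf (us s') s' = (if s' = s then rowf q s - rowf (us s) s else 0)" for s'
    by (simp add: w_def)
  have "(\<Sum>s'\<in>UNIV. rowf (w s') s') - (\<Sum>s'\<in>UNIV. rowf (us s') s')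
      = (\<Sum>s'\<in>UNIV. if s' = s then rowf q s - rowf (us s) s else 0)"
    by (simp only: sum_subtractf[symmetric] d)
  also have "\<dots> = rowf q s - rowf (us s) s" by simp
  finally show ?thesis using le by simp
qed

lemma row_scale: assumes "c > 0" shows "rowf (\<lambda>a. c * q a) s = c * rowf q s"
proof -
  have "(\<Sum>b\<in>UNIV. c * q b) = c * (\<Sum>b\<in>UNIV. q b)" by (simp add: sum_distrib_left)
  then have "(c * q a) / (\<Sum>b\<in>UNIV. c * q b) = q a / (\<Sum>b\<in>UNIV. q b)" for a using assms by simp
  then show ?thesis unfolding rowf_def by (simp add: sum_distrib_left algebra_simps)
qed

lemma row0: "rowf (us s) s = 0"
proof -
  have a: "rowf (\<lambda>a. 2 * us s a) s \<le> rowf (us s) s" by (rule row_le) (use us_pos in auto)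
  have b: "rowf (\<lambda>a. 2 * us s a) s = 2 * rowf (us s) s" by (rule row_scale) simp
  have 1: "rowf (us s) s \<le> 0" using a b by linarith
  have c: "rowf (\<lambda>a. (1/2) * us s a) s \<le> rowf (us s) s" by (rule row_le) (use us_pos in auto)
  have d: "rowf (\<lambda>a. (1/2) * us s a) s = (1/2) * rowf (us s) s" by (rule row_scale) simp
  have 2: "rowf (us s) s \<ge> 0" using c d by linarith
  show ?thesis using 1 2 by simp
qed

lemma row_nonpos: assumes "\<forall>a. q a > 0" shows "rowf q s \<le> 0"
  using row_le[OF assms, of s] row0[of s] by simp

lemma sad_u: "Qs s a = \<tau> * ln (us s a / utilde us s)"
proof -
  define Z where "Z = (\<Sum>b\<in>UNIV. exp (Qs s b / \<tau>))"
  have Z0: "Z > 0" unfolding Z_def by (intro sum_pos) auto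
  define q where "q b = exp (Qs s b / \<tau>) / Z" for b
  have q0: "\<forall>b. q b > 0" using Z0 by (simp add: q_def)
  have qs: "(\<Sum>b\<in>UNIV. q b) = 1" using Z0 unfolding q_def Z_def by (simp add: sum_divide_distrib[symmetric])
  have lq: "ln (q b) = Qs s b / \<tau> - ln Z" for b using Z0 by (simp add: q_def ln_div)
  have "rowf q s = (\<Sum>b\<in>UNIV. q b * Qs s b) - \<tau> * (\<Sum>b\<in>UNIV. q b * ln (q b))"
    unfolding rowf_def qs by simp
  also have "\<dots> = (\<Sum>b\<in>UNIV. q b * Qs s b) - \<tau> * (\<Sum>b\<in>UNIV. q b * (Qs s b / \<tau> - ln Z))"
    by (simp only: lq)
  also have "\<dots> = \<tau> * ln Z * (\<Sum>b\<in>UNIV. q b)" using tau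
    by (simp add: algebra_simps sum_subtractf sum_distrib_left)
  finally have "rowf q s = \<tau> * ln Z" using qs by simp
  then have lnZ: "ln Z \<le> 0" using row_nonpos[OF q0, of s] tau by (simp add: mult_le_0_iff)
  define U where "U = utilde us s"
  have U0: "U > 0" unfolding U_def utilde_def using us_pos by (intro sum_pos) auto
  define p where "p b = us s b / U" for b
  have p0: "\<forall>b. p b > 0" using U0 us_pos by (simp add: p_def)
  have ps: "(\<Sum>b\<in>UNIV. p b) = 1" using U0 unfolding p_def U_def utilde_def by (simp add: sum_divide_distrib[symmetric])
  have "0 = rowf (us s) s" using row0 by simp
  also have "\<dots> = U * (\<Sum>b\<in>UNIV. p b * (Qs s b - \<tau> * ln (p b)))"
    using U0 unfolding rowf_def p_def U_def utilde_def
    by (simp add: sum_distrib_left algebra_simps sum_subtractf)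
  finally have "(\<Sum>b\<in>UNIV. p b * (Qs s b - \<tau> * ln (p b))) = 0" using U0 by simp
  moreover have "Qs s b = \<tau> * (ln (q b) + ln Z)" for b using lq tau by simp
  ultimately have "(\<Sum>b\<in>UNIV. p b * (\<tau> * (ln (q b) + ln Z) - \<tau> * ln (p b))) = 0" by simp
  then have "\<tau> * (ln Z * (\<Sum>b\<in>UNIV. p b) - (\<Sum>b\<in>UNIV. p b * (ln (p b) - ln (q b)))) = 0"
    by (simp add: algebra_simps sum_subtractf sum.distrib sum_distrib_left)
  then have KL: "(\<Sum>b\<in>UNIV. p b * (ln (p b) - ln (q b))) = ln Z" using tau ps by simp
  have kl: "(\<Sum>b\<in>UNIV. (p b - q b)\<^sup>2) / 4 \<le> ln Z"
    using KL_lower[of UNIV p q] p0 q0 ps qs KL by simp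
  have sq0: "0 \<le> (\<Sum>b\<in>UNIV. (p b - q b)\<^sup>2)" by (simp add: sum_nonneg)
  then have "(\<Sum>b\<in>UNIV. (p b - q b)\<^sup>2) / 4 \<le> ln Z" using kl by simp
  then have "(\<Sum>b\<in>UNIV. (p b - q b)\<^sup>2) \<le> 0" using lnZ by simp
  then have "\<forall>b\<in>UNIV. (p b - q b)\<^sup>2 = 0"
    using sum_nonneg_eq_0_iff[of UNIV "\<lambda>b. (p b - q b)\<^sup>2"] by (simp add: antisym sum_nonneg)
  then have pq: "p a = q a" by simp
  have "ln Z \<ge> 0" using kl sq0 by linarith
  then have "ln Z = 0" using lnZ by simp
  then show ?thesis using lq[of a] pq tau by (simp add: p_def U_def)
qed

end

context flow begin

definition "ust s = utilde us s"
definition "pis s a = us s a / ust s"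
definition "x t j = v t j - vs j"
definition "y t s a = u t s a - us s a"
definition "ut t s = utilde (u t) s"
definition "pit t s a = u t s a / ut t s"
definition "KTy t j = (\<Sum>s\<in>UNIV. \<Sum>a\<in>UNIV. K a s j * y t s a)"
definition "Kx t s a = (\<Sum>j\<in>UNIV. K a s j * x t j)"
definition "dx t j = - x t j + KTy t j / \<alpha>"
definition "du t s a = u t s a * (ln (pis s a) - ln (pit t s a) - Kx t s a / \<tau>)"
definition "KTdu t j = (\<Sum>s\<in>UNIV. \<Sum>a\<in>UNIV. K a s j * du t s a)"

definition "Xf t = (\<Sum>j\<in>UNIV. (x t j)\<^sup>2)"
definition "Hf t = (\<Sum>s\<in>UNIV. \<Sum>a\<in>UNIV. hf (u t s a) (us s a))"
definition "Zf t = (\<Sum>j\<in>UNIV. x t j * KTy t j)"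
definition "Yf t = (\<Sum>s\<in>UNIV. \<Sum>a\<in>UNIV. (y t s a)\<^sup>2)"
definition "Gf t = (\<Sum>j\<in>UNIV. (KTy t j)\<^sup>2)"
definition "Pd t = (\<Sum>s\<in>UNIV. \<Sum>a\<in>UNIV. (pit t s a - pis s a)\<^sup>2)"
definition "Dd t = (\<Sum>s\<in>UNIV. \<Sum>a\<in>UNIV. y t s a * (ln (pit t s a) - ln (pis s a)))"

lemma ust_pos: "ust s > 0" unfolding ust_def utilde_def using us_pos by (intro sum_pos) auto
lemma ut_pos: "t \<ge> 0 \<Longrightarrow> ut t s > 0" unfolding ut_def utilde_def using u_pos by (intro sum_pos) auto

lemma v_deriv: assumes "t \<ge> 0" shows "((\<lambda>t. v t j) has_real_derivative dx t j) (at t within {0..})"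
proof -
  have "KTy t j = (\<Sum>s\<in>UNIV. \<Sum>a\<in>UNIV. K a s j * u t s a) - (\<Sum>s\<in>UNIV. \<Sum>a\<in>UNIV. K a s j * us s a)"
    unfolding KTy_def y_def by (simp add: right_diff_distrib sum_subtractf)
  then have "(\<Sum>s\<in>UNIV. \<Sum>a\<in>UNIV. K a s j * u t s a) = KTy t j + \<alpha> * vs j"
    using sad_v[of j] by linarith
  then have "- (v t j - (1 / \<alpha>) * (\<Sum>s\<in>UNIV. \<Sum>a\<in>UNIV. K a s j * u t s a)) = dx t j"
    using alpha unfolding dx_def x_def by (simp add: field_simps)
  moreover have "((\<lambda>t. v t j) has_real_derivative (- (v t j - (1 / \<alpha>) * (\<Sum>s\<in>UNIV. \<Sum>a\<in>UNIV. K a s j * u t s a)))) (at t within {0..})"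
    using v_ode assms by blast
  ultimately show ?thesis by simp
qed

lemma u_deriv: assumes "t \<ge> 0" shows "((\<lambda>t. u t s a) has_real_derivative du t s a) (at t within {0..})"
proof -
  have "Kx t s a = (\<Sum>j\<in>UNIV. K a s j * v t j) - (\<Sum>j\<in>UNIV. K a s j * vs j)"
    unfolding Kx_def x_def by (simp add: right_diff_distrib sum_subtractf)
  then have "(\<Sum>j\<in>UNIV. K a s j * v t j) = (\<Sum>j\<in>UNIV. K a s j * vs j) + Kx t s a"
    by linarith
  then have "r s a - (\<Sum>j\<in>UNIV. K a s j * v t j) = \<tau> * ln (pis s a) - Kx t s a"
    using sad_u[of s a] unfolding Qs_def pis_def ust_def by simp
  then have R: "(1 / \<tau>) * (r s a - (\<Sum>j\<in>UNIV. K a s j * v t j)) = ln (pis s a) - Kx t s a / \<tau>"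
    using tau by (simp add: field_simps)
  have "- u t s a * (ln (u t s a / utilde (u t) s) - (1 / \<tau>) * (r s a - (\<Sum>j\<in>UNIV. K a s j * v t j)))
      = du t s a"
    unfolding R du_def pit_def ut_def by (simp add: algebra_simps)
  moreover have "((\<lambda>t. u t s a) has_real_derivative (- u t s a * (ln (u t s a / utilde (u t) s) - (1 / \<tau>) * (r s a - (\<Sum>j\<in>UNIV. K a s j * v t j))))) (at t within {0..})"
    using u_ode assms by blast
  ultimately show ?thesis by simp
qed

lemma X_deriv: assumes "t \<ge> 0"
  shows "(Xf has_real_derivative (\<Sum>j\<in>UNIV. 2 * x t j * dx t j)) (at t within {0..})"
  unfolding Xf_def[abs_def]
proof (rule DERIV_sum)
  fix j
  have h: "((\<lambda>t. (v t j - vs j)\<^sup>2) has_real_derivative of_nat 2 * ((dx t j - 0) * (v t j - vs j) ^ (2 - Suc 0))) (at t within {0..})"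
    by (rule DERIV_power, rule DERIV_diff, rule v_deriv[OF assms], rule DERIV_const)
  show "((\<lambda>t. (x t j)\<^sup>2) has_real_derivative 2 * x t j * dx t j) (at t within {0..})"
    unfolding x_def by (rule DERIV_cong[OF h]) simp
qed

lemma H_deriv: assumes "t \<ge> 0"
  shows "(Hf has_real_derivative (\<Sum>s\<in>UNIV. \<Sum>a\<in>UNIV. (1 - us s a / u t s a) * du t s a)) (at t within {0..})"
  unfolding Hf_def[abs_def]
proof (rule DERIV_sum, rule DERIV_sum)
  fix s a
  have up: "u t s a > 0" using u_pos assms by auto
  have l: "((\<lambda>t. ln (u t s a)) has_real_derivative inverse (u t s a) * du t s a) (at t within {0..})"
    by (rule DERIV_chain2[OF DERIV_ln[OF up] u_deriv[OF assms]])
  have "((\<lambda>t. u t s a - us s a - us s a * (ln (u t s a) - ln (us s a))) has_real_derivative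
      du t s a - 0 - us s a * (inverse (u t s a) * du t s a - 0)) (at t within {0..})"
    by (intro DERIV_diff DERIV_cmult u_deriv[OF assms] l DERIV_const)
  then show "((\<lambda>t. hf (u t s a) (us s a)) has_real_derivative (1 - us s a / u t s a) * du t s a) (at t within {0..})"
    unfolding hf_def using up by (simp add: field_simps)
qed

lemma KTy_deriv: assumes "t \<ge> 0"
  shows "((\<lambda>t. KTy t j) has_real_derivative KTdu t j) (at t within {0..})"
  unfolding KTy_def KTdu_def y_def
  by (intro DERIV_sum DERIV_cmult DERIV_diff[where E=0, simplified] u_deriv[OF assms] DERIV_const)

lemma Z_deriv: assumes "t \<ge> 0"
  shows "(Zf has_real_derivative (\<Sum>j\<in>UNIV. dx t j * KTy t j + KTdu t j * x t j)) (at t within {0..})"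
  unfolding Zf_def[abs_def]
proof (rule DERIV_sum)
  fix j
  have xd: "((\<lambda>t. x t j) has_real_derivative dx t j) (at t within {0..})"
    unfolding x_def using DERIV_diff[OF v_deriv[OF assms] DERIV_const[where k="vs j"]] by simp
  show "((\<lambda>t. x t j * KTy t j) has_real_derivative dx t j * KTy t j + KTdu t j * x t j) (at t within {0..})"
    by (rule DERIV_mult[OF xd KTy_deriv[OF assms]])
qed

end

context flow begin

lemma swap_xy: "(\<Sum>j\<in>UNIV. x t j * KTy t j) = (\<Sum>s\<in>UNIV. \<Sum>a\<in>UNIV. y t s a * Kx t s a)"
proof -
  have "(\<Sum>j\<in>UNIV. x t j * KTy t j) = (\<Sum>j\<in>UNIV. \<Sum>s\<in>UNIV. \<Sum>a\<in>UNIV. x t j * K a s j * y t s a)"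
    unfolding KTy_def by (simp add: sum_distrib_left mult.assoc)
  also have "\<dots> = (\<Sum>s\<in>UNIV. \<Sum>j\<in>UNIV. \<Sum>a\<in>UNIV. x t j * K a s j * y t s a)"
    by (rule sum.swap)
  also have "\<dots> = (\<Sum>s\<in>UNIV. \<Sum>a\<in>UNIV. \<Sum>j\<in>UNIV. x t j * K a s j * y t s a)"
    by (rule sum.cong[OF refl], rule sum.swap)
  also have "\<dots> = (\<Sum>s\<in>UNIV. \<Sum>a\<in>UNIV. y t s a * Kx t s a)"
    unfolding Kx_def by (simp add: sum_distrib_left mult_ac)
  finally show ?thesis .
qed

lemma W_val: assumes "t \<ge> 0"
  shows "\<alpha> / 2 * (\<Sum>j\<in>UNIV. 2 * x t j * dx t j) + \<tau> * (\<Sum>s\<in>UNIV. \<Sum>a\<in>UNIV. (1 - us s a / u t s a) * du t s a)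
     = - \<alpha> * Xf t - \<tau> * Dd t"
proof -
  have 1: "\<alpha> / 2 * (\<Sum>j\<in>UNIV. 2 * x t j * dx t j) = - \<alpha> * Xf t + (\<Sum>j\<in>UNIV. x t j * KTy t j)"
  proof -
    have "\<alpha> / 2 * (\<Sum>j\<in>UNIV. 2 * x t j * dx t j) = (\<Sum>j\<in>UNIV. x t j * KTy t j - \<alpha> * (x t j)\<^sup>2)"
      unfolding sum_distrib_left using alpha by (intro sum.cong refl) (simp add: dx_def field_simps power2_eq_square)
    also have "\<dots> = (\<Sum>j\<in>UNIV. x t j * KTy t j) - (\<Sum>j\<in>UNIV. \<alpha> * (x t j)\<^sup>2)"
      by (simp only: sum_subtractf)
    also have "(\<Sum>j\<in>UNIV. \<alpha> * (x t j)\<^sup>2) = \<alpha> * Xf t" unfolding Xf_def by (simp add: sum_distrib_left)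
    finally show ?thesis by simp
  qed
  have e: "(1 - us s a / u t s a) * du t s a = y t s a * (ln (pis s a) - ln (pit t s a)) - y t s a * Kx t s a / \<tau>" for s a
  proof -
    have up: "u t s a > 0" using u_pos assms by auto
    have yy: "(1 - us s a / u t s a) * u t s a = y t s a" using up by (simp add: y_def field_simps)
    have "(1 - us s a / u t s a) * du t s a = ((1 - us s a / u t s a) * u t s a) * (ln (pis s a) - ln (pit t s a) - Kx t s a / \<tau>)"
      unfolding du_def by (simp only: mult.assoc)
    also have "\<dots> = y t s a * (ln (pis s a) - ln (pit t s a) - Kx t s a / \<tau>)" by (simp only: yy)
    also have "\<dots> = y t s a * (ln (pis s a) - ln (pit t s a)) - y t s a * Kx t s a / \<tau>" by (simp add: algebra_simps)
    finally show ?thesis .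
  qed
  have 2: "\<tau> * (\<Sum>s\<in>UNIV. \<Sum>a\<in>UNIV. (1 - us s a / u t s a) * du t s a)
      = - \<tau> * Dd t - (\<Sum>s\<in>UNIV. \<Sum>a\<in>UNIV. y t s a * Kx t s a)"
  proof -
    have a: "(\<Sum>s\<in>UNIV. \<Sum>a\<in>UNIV. (1 - us s a / u t s a) * du t s a)
       = (\<Sum>s\<in>UNIV. \<Sum>a\<in>UNIV. y t s a * (ln (pis s a) - ln (pit t s a))) - (\<Sum>s\<in>UNIV. \<Sum>a\<in>UNIV. y t s a * Kx t s a / \<tau>)"
      unfolding e by (simp only: sum_subtractf)
    have b: "(\<Sum>s\<in>UNIV. \<Sum>a\<in>UNIV. y t s a * (ln (pis s a) - ln (pit t s a))) = - Dd t"
      unfolding Dd_def by (simp add: sum_negf[symmetric] algebra_simps)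
    have c: "(\<Sum>s\<in>UNIV. \<Sum>a\<in>UNIV. y t s a * Kx t s a / \<tau>) = (\<Sum>s\<in>UNIV. \<Sum>a\<in>UNIV. y t s a * Kx t s a) / \<tau>"
      by (simp add: sum_divide_distrib)
    show ?thesis unfolding a b c using tau by (simp add: field_simps)
  qed
  show ?thesis using 1 2 swap_xy[of t] by linarith
qed

lemma pit_sum: "t \<ge> 0 \<Longrightarrow> (\<Sum>a\<in>UNIV. pit t s a) = 1"
  unfolding pit_def using ut_pos[of t s] by (simp add: sum_divide_distrib[symmetric] ut_def utilde_def)
lemma pis_sum: "(\<Sum>a\<in>UNIV. pis s a) = 1"
  unfolding pis_def using ust_pos[of s] by (simp add: sum_divide_distrib[symmetric] ust_def utilde_def)
lemma pit_pos: "t \<ge> 0 \<Longrightarrow> pit t s a > 0"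
  unfolding pit_def using ut_pos[of t s] u_pos by auto
lemma pis_pos: "pis s a > 0"
  unfolding pis_def using ust_pos[of s] us_pos by auto

lemma D_row: assumes "t \<ge> 0"
  shows "ust s * (\<Sum>a\<in>UNIV. (pit t s a - pis s a)\<^sup>2) / 4 \<le> (\<Sum>a\<in>UNIV. y t s a * (ln (pit t s a) - ln (pis s a)))"
proof -
  have k1: "(\<Sum>a\<in>UNIV. (pit t s a - pis s a)\<^sup>2) / 4 \<le> (\<Sum>a\<in>UNIV. pit t s a * (ln (pit t s a) - ln (pis s a)))"
    using KL_lower[of UNIV "pit t s" "pis s"] pit_pos[OF assms] pis_pos pit_sum[OF assms] pis_sum by simp
  have k2: "(\<Sum>a\<in>UNIV. (pis s a - pit t s a)\<^sup>2) / 4 \<le> (\<Sum>a\<in>UNIV. pis s a * (ln (pis s a) - ln (pit t s a)))"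
    using KL_lower[of UNIV "pis s" "pit t s"] pit_pos[OF assms] pis_pos pit_sum[OF assms] pis_sum by simp
  have sq: "(pis s a - pit t s a)\<^sup>2 = (pit t s a - pis s a)\<^sup>2" for a by (simp add: power2_commute)
  have nn: "0 \<le> (\<Sum>a\<in>UNIV. (pit t s a - pis s a)\<^sup>2) / 4" by (simp add: sum_nonneg)
  have ye: "y t s a = ut t s * pit t s a - ust s * pis s a" for a
  proof -
    have "ut t s * pit t s a = u t s a" using ut_pos[OF assms, of s] by (simp add: pit_def)
    moreover have "ust s * pis s a = us s a" using ust_pos[of s] by (simp add: pis_def)
    ultimately show ?thesis by (simp add: y_def)
  qed
  have "(\<Sum>a\<in>UNIV. y t s a * (ln (pit t s a) - ln (pis s a)))
      = ut t s * (\<Sum>a\<in>UNIV. pit t s a * (ln (pit t s a) - ln (pis s a)))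
        + ust s * (\<Sum>a\<in>UNIV. pis s a * (ln (pis s a) - ln (pit t s a)))"
  proof -
    have "(\<Sum>a\<in>UNIV. y t s a * (ln (pit t s a) - ln (pis s a)))
      = (\<Sum>a\<in>UNIV. ut t s * (pit t s a * (ln (pit t s a) - ln (pis s a))) + ust s * (pis s a * (ln (pis s a) - ln (pit t s a))))"
      unfolding ye by (intro sum.cong refl) (simp add: algebra_simps)
    then show ?thesis by (simp only: sum.distrib sum_distrib_left)
  qed
  moreover have "ut t s * (\<Sum>a\<in>UNIV. pit t s a * (ln (pit t s a) - ln (pis s a))) \<ge> 0"
    using k1 nn ut_pos[OF assms, of s] by (simp add: zero_le_mult_iff)
  moreover have "ust s * (\<Sum>a\<in>UNIV. pis s a * (ln (pis s a) - ln (pit t s a))) \<ge> ust s * ((\<Sum>a\<in>UNIV. (pit t s a - pis s a)\<^sup>2) / 4)"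
    using k2 ust_pos[of s] unfolding sq by (intro mult_left_mono) auto
  ultimately show ?thesis by simp
qed

lemma D_lower: assumes "t \<ge> 0" and cU: "\<forall>s. cU \<le> ust s" "cU > 0"
  shows "cU / 4 * Pd t \<le> Dd t"
proof -
  have "cU / 4 * Pd t = (\<Sum>s\<in>UNIV. cU * (\<Sum>a\<in>UNIV. (pit t s a - pis s a)\<^sup>2) / 4)"
    unfolding Pd_def by (simp add: sum_distrib_left sum_divide_distrib)
  also have "\<dots> \<le> (\<Sum>s\<in>UNIV. ust s * (\<Sum>a\<in>UNIV. (pit t s a - pis s a)\<^sup>2) / 4)"
    using cU by (intro sum_mono divide_right_mono mult_right_mono) (auto simp: sum_nonneg)
  also have "\<dots> \<le> Dd t" unfolding Dd_def by (intro sum_mono D_row[OF assms(1)])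
  finally show ?thesis .
qed

lemma D_nonneg: assumes "t \<ge> 0" shows "0 \<le> Dd t"
proof -
  obtain cU where "cU > 0" "\<forall>s. cU \<le> ust s" using fin_lower1[of ust] ust_pos by blast
  then have "cU / 4 * Pd t \<le> Dd t" using D_lower[OF assms] by blast
  moreover have "0 \<le> cU / 4 * Pd t" using \<open>cU > 0\<close> unfolding Pd_def by (simp add: sum_nonneg)
  ultimately show ?thesis by linarith
qed

definition "Wf t = \<alpha> / 2 * Xf t + \<tau> * Hf t"

lemma W_deriv: assumes "t \<ge> 0" shows "(Wf has_real_derivative (- \<alpha> * Xf t - \<tau> * Dd t)) (at t within {0..})"
proof -
  have "(Wf has_real_derivative \<alpha> / 2 * (\<Sum>j\<in>UNIV. 2 * x t j * dx t j) + \<tau> * (\<Sum>s\<in>UNIV. \<Sum>a\<in>UNIV. (1 - us s a / u t s a) * du t s a)) (at t within {0..})"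
    unfolding Wf_def[abs_def] by (intro DERIV_add DERIV_cmult X_deriv[OF assms] H_deriv[OF assms])
  then show ?thesis using W_val[OF assms] by simp
qed

lemma W_mono: assumes "t \<ge> 0" shows "Wf t \<le> Wf 0"
proof (rule mono_within0[OF W_deriv])
  fix t :: real assume t: "t \<ge> 0"
  have "0 \<le> Xf t" unfolding Xf_def by (simp add: sum_nonneg)
  then have "0 \<le> \<alpha> * Xf t" using alpha by simp
  moreover have "0 \<le> \<tau> * Dd t" using D_nonneg[OF t] tau by simp
  ultimately show "- \<alpha> * Xf t - \<tau> * Dd t \<le> 0" by simp
qed (use assms in auto)

end

context flow begin

lemma H_le_W: assumes "t \<ge> 0" shows "\<tau> * Hf t \<le> Wf 0"
proof -
  have "0 \<le> Xf t" unfolding Xf_def by (simp add: sum_nonneg)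
  then have "\<tau> * Hf t \<le> Wf t" unfolding Wf_def using alpha by simp
  then show ?thesis using W_mono[OF assms] by simp
qed

lemma hf_le_H: assumes "t \<ge> 0" shows "hf (u t s a) (us s a) \<le> Hf t"
proof -
  have nn: "0 \<le> hf (u t s' a') (us s' a')" for s' a' using hf_nonneg u_pos us_pos assms by auto
  have "hf (u t s a) (us s a) \<le> (\<Sum>a\<in>UNIV. hf (u t s a) (us s a))"
    by (rule member_le_sum) (use nn in auto)
  also have "\<dots> \<le> Hf t" unfolding Hf_def
    by (rule member_le_sum[of s UNIV "\<lambda>s. \<Sum>a\<in>UNIV. hf (u t s a) (us s a)"]) (use nn in \<open>auto intro: sum_nonneg\<close>)
  finally show ?thesis .
qed

lemma bounds: "\<exists>mu Mu. mu > 0 \<and> (\<forall>s a. mu \<le> us s a \<and> us s a \<le> Mu \<and> (\<forall>t\<ge>0. mu \<le> u t s a \<and> u t s a \<le> Mu))"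
proof -
  define B where "B = Wf 0 / \<tau>"
  have hB: "hf (u t s a) (us s a) \<le> B" if "t \<ge> 0" for t s a
  proof -
    have "\<tau> * hf (u t s a) (us s a) \<le> \<tau> * Hf t" using hf_le_H[OF that, of s a] tau by simp
    then have "\<tau> * hf (u t s a) (us s a) \<le> Wf 0" using H_le_W[OF that] by linarith
    then show ?thesis using tau unfolding B_def by (simp add: field_simps)
  qed
  obtain Mu where Mu: "\<forall>s a. max ((sqrt (us s a) + sqrt B)\<^sup>2) (us s a) \<le> Mu"
    using fin_upper2[of "\<lambda>s a. max ((sqrt (us s a) + sqrt B)\<^sup>2) (us s a)"] by blast
  obtain mu where mu: "mu > 0" "\<forall>s a. mu \<le> min (us s a * exp (- (B + us s a) / us s a)) (us s a)"
    using fin_lower2[of "\<lambda>s a. min (us s a * exp (- (B + us s a) / us s a)) (us s a)"] us_pos by auto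
  have "mu \<le> us s a \<and> us s a \<le> Mu \<and> (\<forall>t\<ge>0. mu \<le> u t s a \<and> u t s a \<le> Mu)" for s a
  proof (intro conjI allI impI)
    show "mu \<le> us s a" using mu(2) by (meson min.boundedE)
    show "us s a \<le> Mu" using Mu by (meson max.boundedE)
    fix t :: real assume t: "t \<ge> 0"
    have up: "u t s a > 0" using u_pos t by auto
    show "mu \<le> u t s a" using hf_bound_below[OF up us_pos hB[OF t]] mu(2) by (meson min.boundedE order_trans)
    show "u t s a \<le> Mu" using hf_bound_above[OF up us_pos hB[OF t]] Mu by (meson max.boundedE order_trans)
  qed
  then show ?thesis using mu(1) by blast
qed

end

context flow begin

definition "CK1 = (\<Sum>j\<in>UNIV. \<Sum>s\<in>UNIV. \<Sum>a\<in>UNIV. (K a s j)\<^sup>2)"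
definition "CK2 = (\<Sum>s\<in>UNIV. \<Sum>a\<in>UNIV. \<Sum>j\<in>UNIV. (K a s j)\<^sup>2)"

lemma CK_nonneg: "CK1 \<ge> 0" "CK2 \<ge> 0" unfolding CK1_def CK2_def by (simp_all add: sum_nonneg)

lemma G_le: "Gf t \<le> CK1 * Yf t"
proof -
  have "(KTy t j)\<^sup>2 \<le> (\<Sum>s\<in>UNIV. \<Sum>a\<in>UNIV. (K a s j)\<^sup>2) * Yf t" for j
    unfolding KTy_def Yf_def by (rule CS2)
  then have "Gf t \<le> (\<Sum>j\<in>UNIV. (\<Sum>s\<in>UNIV. \<Sum>a\<in>UNIV. (K a s j)\<^sup>2) * Yf t)"
    unfolding Gf_def by (rule sum_mono)
  then show ?thesis unfolding CK1_def by (simp add: sum_distrib_right)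
qed

lemma Kx_le: "(\<Sum>s\<in>UNIV. \<Sum>a\<in>UNIV. (Kx t s a)\<^sup>2) \<le> CK2 * Xf t"
proof -
  have "(Kx t s a)\<^sup>2 \<le> (\<Sum>j\<in>UNIV. (K a s j)\<^sup>2) * Xf t" for s a
    unfolding Kx_def Xf_def by (rule Cauchy_Schwarz_ineq_sum)
  then have "(\<Sum>s\<in>UNIV. \<Sum>a\<in>UNIV. (Kx t s a)\<^sup>2) \<le> (\<Sum>s\<in>UNIV. \<Sum>a\<in>UNIV. (\<Sum>j\<in>UNIV. (K a s j)\<^sup>2) * Xf t)"
    by (intro sum_mono)
  then show ?thesis unfolding CK2_def by (simp add: sum_distrib_right)
qed

lemma KTdu_le: "(\<Sum>j\<in>UNIV. (KTdu t j)\<^sup>2) \<le> CK1 * (\<Sum>s\<in>UNIV. \<Sum>a\<in>UNIV. (du t s a)\<^sup>2)"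
proof -
  have "(KTdu t j)\<^sup>2 \<le> (\<Sum>s\<in>UNIV. \<Sum>a\<in>UNIV. (K a s j)\<^sup>2) * (\<Sum>s\<in>UNIV. \<Sum>a\<in>UNIV. (du t s a)\<^sup>2)" for j
    unfolding KTdu_def by (rule CS2)
  then have "(\<Sum>j\<in>UNIV. (KTdu t j)\<^sup>2) \<le> (\<Sum>j\<in>UNIV. (\<Sum>s\<in>UNIV. \<Sum>a\<in>UNIV. (K a s j)\<^sup>2) * (\<Sum>s\<in>UNIV. \<Sum>a\<in>UNIV. (du t s a)\<^sup>2))"
    by (rule sum_mono)
  then show ?thesis unfolding CK1_def by (simp add: sum_distrib_right)
qed

lemma Z_abs: "\<bar>Zf t\<bar> \<le> (Xf t + Gf t) / 2"
proof -
  have "\<bar>x t j * KTy t j\<bar> \<le> ((x t j)\<^sup>2 + (KTy t j)\<^sup>2) / 2" for j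
    using young[of 1 "\<bar>x t j\<bar>" "\<bar>KTy t j\<bar>"] by (simp add: abs_mult)
  then have "(\<Sum>j\<in>UNIV. \<bar>x t j * KTy t j\<bar>) \<le> (\<Sum>j\<in>UNIV. ((x t j)\<^sup>2 + (KTy t j)\<^sup>2) / 2)"
    by (rule sum_mono)
  moreover have "\<bar>Zf t\<bar> \<le> (\<Sum>j\<in>UNIV. \<bar>x t j * KTy t j\<bar>)" unfolding Zf_def by (rule sum_abs)
  ultimately show ?thesis unfolding Xf_def Gf_def by (simp add: sum.distrib sum_divide_distrib[symmetric])
qed

lemma xKTy_le: "(\<Sum>j\<in>UNIV. x t j * KTy t j) \<le> \<alpha> / 2 * Xf t + Gf t / (2 * \<alpha>)"
proof -
  have "x t j * KTy t j \<le> \<alpha> / 2 * (x t j)\<^sup>2 + (KTy t j)\<^sup>2 / (2 * \<alpha>)" for j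
    using young[OF alpha, of "x t j" "KTy t j"] by (simp add: field_simps)
  then have "(\<Sum>j\<in>UNIV. x t j * KTy t j) \<le> (\<Sum>j\<in>UNIV. \<alpha> / 2 * (x t j)\<^sup>2 + (KTy t j)\<^sup>2 / (2 * \<alpha>))"
    by (rule sum_mono)
  then show ?thesis unfolding Xf_def Gf_def by (simp add: sum.distrib sum_distrib_left sum_divide_distrib[symmetric])
qed

lemma xKTdu_le: "- (\<Sum>j\<in>UNIV. x t j * KTdu t j) \<le> (Xf t + (\<Sum>j\<in>UNIV. (KTdu t j)\<^sup>2)) / 2"
proof -
  have "- (x t j * KTdu t j) \<le> ((x t j)\<^sup>2 + (KTdu t j)\<^sup>2) / 2" for j
    using young[of 1 "x t j" "- KTdu t j"] by (simp add: field_simps)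
  then have "(\<Sum>j\<in>UNIV. - (x t j * KTdu t j)) \<le> (\<Sum>j\<in>UNIV. ((x t j)\<^sup>2 + (KTdu t j)\<^sup>2) / 2)"
    by (rule sum_mono)
  then show ?thesis unfolding Xf_def by (simp add: sum.distrib sum_divide_distrib[symmetric] sum_negf)
qed

lemma sq_le_sum_abs_sq:
  fixes w :: "'S \<Rightarrow> real"
  shows "(\<Sum>s\<in>UNIV. (w s)\<^sup>2) \<le> (\<Sum>s\<in>UNIV. \<bar>w s\<bar>)\<^sup>2"
proof -
  have "\<bar>w s\<bar> \<le> (\<Sum>s\<in>UNIV. \<bar>w s\<bar>)" for s by (rule member_le_sum) auto
  then have "(w s)\<^sup>2 \<le> \<bar>w s\<bar> * (\<Sum>s\<in>UNIV. \<bar>w s\<bar>)" for s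
    by (metis abs_ge_zero mult_left_mono power2_abs power2_eq_square)
  then have "(\<Sum>s\<in>UNIV. (w s)\<^sup>2) \<le> (\<Sum>s\<in>UNIV. \<bar>w s\<bar> * (\<Sum>s\<in>UNIV. \<bar>w s\<bar>))" by (rule sum_mono)
  then show ?thesis by (simp add: sum_distrib_right[symmetric] power2_eq_square)
qed

end

context flow begin

context
  fixes mu Mu :: real
  assumes mu0: "mu > 0"
    and bnd: "\<forall>s a. mu \<le> us s a \<and> us s a \<le> Mu \<and> (\<forall>t\<ge>0. mu \<le> u t s a \<and> u t s a \<le> Mu)"
begin

definition "NA = real CARD('A)"
definition "pm = mu / (NA * Mu)"

lemma Mu_pos: "Mu > 0" using bnd mu0 by (meson less_le_trans)
lemma NA_pos: "NA \<ge> 1" unfolding NA_def by simp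
lemma pm_pos: "pm > 0" unfolding pm_def using mu0 Mu_pos NA_pos by simp

lemma ut_le: "t \<ge> 0 \<Longrightarrow> ut t s \<le> NA * Mu"
  unfolding ut_def utilde_def NA_def using bnd sum_mono[of UNIV "u t s" "\<lambda>_. Mu"] by simp
lemma ust_le: "ust s \<le> NA * Mu"
  unfolding ust_def utilde_def NA_def using bnd sum_mono[of UNIV "us s" "\<lambda>_. Mu"] by simp
lemma ust_ge: "mu \<le> ust s"
proof -
  have "us s a \<le> ust s" for a unfolding ust_def utilde_def by (rule member_le_sum) (use us_pos in \<open>auto intro: less_imp_le\<close>)
  then show ?thesis using bnd by (meson order_trans)
qed

lemma pit_ge: assumes "t \<ge> 0" shows "pm \<le> pit t s a"
proof -
  have "mu / (NA * Mu) \<le> u t s a / ut t s"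
    using bnd assms ut_pos[OF assms, of s] ut_le[OF assms, of s] mu0 u_pos
    by (intro frac_le) (auto intro: less_imp_le)
  then show ?thesis unfolding pm_def pit_def .
qed

lemma pis_ge: "pm \<le> pis s a"
proof -
  have "mu / (NA * Mu) \<le> us s a / ust s"
    using bnd ust_pos[of s] ust_le[of s] mu0 us_pos by (intro frac_le) (auto intro: less_imp_le)
  then show ?thesis unfolding pm_def pis_def .
qed

lemma pis_le1: "pis s a \<le> 1"
  using member_le_sum[of a UNIV "pis s"] pis_sum[of s] pis_pos[of s] by (simp add: less_imp_le)

lemma du_sq: assumes "t \<ge> 0"
  shows "(\<Sum>s\<in>UNIV. \<Sum>a\<in>UNIV. (du t s a)\<^sup>2) \<le> 2 * Mu\<^sup>2 * (Pd t / pm\<^sup>2 + CK2 * Xf t / \<tau>\<^sup>2)"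
proof -
  have pw: "(du t s a)\<^sup>2 \<le> 2 * Mu\<^sup>2 * ((pit t s a - pis s a)\<^sup>2 / pm\<^sup>2 + (Kx t s a)\<^sup>2 / \<tau>\<^sup>2)" for s a
  proof -
    define A where "A = ln (pis s a) - ln (pit t s a)"
    define B where "B = Kx t s a / \<tau>"
    have "\<bar>A\<bar> \<le> \<bar>pis s a - pit t s a\<bar> / pm"
      unfolding A_def by (rule ln_lip[OF pis_ge pit_ge[OF assms] pm_pos])
    then have "A\<^sup>2 \<le> (\<bar>pis s a - pit t s a\<bar> / pm)\<^sup>2"
      by (metis abs_ge_zero power2_abs power_mono)
    then have A2: "A\<^sup>2 \<le> (pit t s a - pis s a)\<^sup>2 / pm\<^sup>2"
      by (simp add: power_divide power2_commute)
    have AB: "(A - B)\<^sup>2 \<le> 2 * A\<^sup>2 + 2 * B\<^sup>2"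
    proof -
      have "(A - B)\<^sup>2 = 2 * A\<^sup>2 + 2 * B\<^sup>2 - (A + B)\<^sup>2" by (simp add: power2_eq_square algebra_simps)
      then show ?thesis using zero_le_power2[of "A + B"] by linarith
    qed
    have u2: "(u t s a)\<^sup>2 \<le> Mu\<^sup>2" using bnd assms u_pos by (intro power_mono) (auto intro: less_imp_le)
    have "(du t s a)\<^sup>2 = (u t s a)\<^sup>2 * (A - B)\<^sup>2" unfolding du_def A_def B_def by (simp add: power_mult_distrib)
    also have "\<dots> \<le> Mu\<^sup>2 * (2 * A\<^sup>2 + 2 * B\<^sup>2)" using u2 AB by (intro mult_mono) auto
    also have "\<dots> \<le> Mu\<^sup>2 * (2 * ((pit t s a - pis s a)\<^sup>2 / pm\<^sup>2) + 2 * B\<^sup>2)"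
      using A2 by (intro mult_left_mono) auto
    also have "\<dots> = 2 * Mu\<^sup>2 * ((pit t s a - pis s a)\<^sup>2 / pm\<^sup>2 + (Kx t s a)\<^sup>2 / \<tau>\<^sup>2)"
      unfolding B_def by (simp add: power_divide algebra_simps)
    finally show ?thesis .
  qed
  have "(\<Sum>s\<in>UNIV. \<Sum>a\<in>UNIV. (du t s a)\<^sup>2) \<le> (\<Sum>s\<in>UNIV. \<Sum>a\<in>UNIV. 2 * Mu\<^sup>2 * ((pit t s a - pis s a)\<^sup>2 / pm\<^sup>2 + (Kx t s a)\<^sup>2 / \<tau>\<^sup>2))"
    by (intro sum_mono pw)
  also have "\<dots> = 2 * Mu\<^sup>2 * (Pd t / pm\<^sup>2 + (\<Sum>s\<in>UNIV. \<Sum>a\<in>UNIV. (Kx t s a)\<^sup>2) / \<tau>\<^sup>2)"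
    unfolding Pd_def by (simp only: sum_distrib_left[symmetric] sum.distrib sum_divide_distrib[symmetric])
  also have "\<dots> \<le> 2 * Mu\<^sup>2 * (Pd t / pm\<^sup>2 + CK2 * Xf t / \<tau>\<^sup>2)"
    using Kx_le[of t] by (intro mult_left_mono add_left_mono divide_right_mono) auto
  finally show ?thesis .
qed

lemma H_upper: assumes "t \<ge> 0" shows "Hf t \<le> Yf t / mu"
proof -
  have "hf (u t s a) (us s a) \<le> (y t s a)\<^sup>2 / mu" for s a
  proof -
    have up: "u t s a > 0" using u_pos assms by auto
    have "hf (u t s a) (us s a) \<le> (u t s a - us s a)\<^sup>2 / u t s a" by (rule hf_upper[OF up us_pos])
    also have "\<dots> \<le> (u t s a - us s a)\<^sup>2 / mu" using bnd assms mu0 up by (intro divide_left_mono) auto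
    finally show ?thesis by (simp add: y_def)
  qed
  then have "Hf t \<le> (\<Sum>s\<in>UNIV. \<Sum>a\<in>UNIV. (y t s a)\<^sup>2 / mu)" unfolding Hf_def by (intro sum_mono)
  then show ?thesis unfolding Yf_def by (simp add: sum_divide_distrib[symmetric])
qed

lemma H_lower: assumes "t \<ge> 0" shows "Yf t \<le> 4 * Mu * Hf t"
proof -
  have "(y t s a)\<^sup>2 \<le> 4 * Mu * hf (u t s a) (us s a)" for s a
    unfolding y_def using hf_lower[of "u t s a" "us s a" Mu] u_pos us_pos bnd assms by auto
  then have "Yf t \<le> (\<Sum>s\<in>UNIV. \<Sum>a\<in>UNIV. 4 * Mu * hf (u t s a) (us s a))" unfolding Yf_def by (intro sum_mono)
  then show ?thesis unfolding Hf_def by (simp add: sum_distrib_left)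
qed


definition "NS = real CARD('S)"
definition "M2 = (NA * Mu)\<^sup>2"
definition "C4 = 4 * NS / (1 - \<gamma>)\<^sup>2 * (1 + CK1 * M2) + 2 * M2"

lemma sq_diff_le: fixes a b :: real shows "(a - b)\<^sup>2 \<le> 2 * a\<^sup>2 + 2 * b\<^sup>2"
proof -
  have "(a - b)\<^sup>2 = 2 * a\<^sup>2 + 2 * b\<^sup>2 - (a + b)\<^sup>2" by (simp add: power2_eq_square algebra_simps)
  then show ?thesis using zero_le_power2[of "a + b"] by linarith
qed

lemma sq_add_le: fixes a b :: real shows "(a + b)\<^sup>2 \<le> 2 * a\<^sup>2 + 2 * b\<^sup>2"
  using sq_diff_le[of a "- b"] by simp

lemma ut2_le: "t \<ge> 0 \<Longrightarrow> (ut t s)\<^sup>2 \<le> M2"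
  unfolding M2_def using ut_le ut_pos by (intro power_mono) (auto intro: less_imp_le)

lemma Kmat_split: "K a s j = (if s = j then 1 else 0) - \<gamma> * P a s j"
  unfolding Kmat_def by simp

lemma Y_le: assumes t: "t \<ge> 0" shows "Yf t \<le> C4 * (Gf t + Pd t)"
proof -
  define w where "w s = ut t s - ust s" for s
  define z where "z j = (\<Sum>s\<in>UNIV. \<Sum>a\<in>UNIV. K a s j * (w s * pis s a))" for j
  define e where "e j = (\<Sum>s\<in>UNIV. \<Sum>a\<in>UNIV. K a s j * (ut t s * (pit t s a - pis s a)))" for j
  have y1: "y t s a = w s * pis s a + ut t s * (pit t s a - pis s a)" for s a
  proof -
    have "ut t s * pit t s a = u t s a" using ut_pos[OF t, of s] by (simp add: pit_def)
    moreover have "ust s * pis s a = us s a" using ust_pos[of s] by (simp add: pis_def)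
    ultimately show ?thesis unfolding w_def y_def by (simp add: algebra_simps)
  qed
  have Y1: "Yf t \<le> 2 * (\<Sum>s\<in>UNIV. (w s)\<^sup>2) + 2 * M2 * Pd t"
  proof -
    have pw: "(y t s a)\<^sup>2 \<le> 2 * ((w s)\<^sup>2 * pis s a) + 2 * M2 * (pit t s a - pis s a)\<^sup>2" for s a
    proof -
      have "(w s * pis s a)\<^sup>2 \<le> (w s)\<^sup>2 * pis s a"
      proof -
        have "(pis s a)\<^sup>2 \<le> pis s a" using pis_le1[of s a] pis_pos[of s a]
          by (simp add: power2_eq_square mult_le_cancel_right1)
        then show ?thesis by (simp add: power_mult_distrib mult_left_mono)
      qed
      moreover have "(ut t s * (pit t s a - pis s a))\<^sup>2 \<le> M2 * (pit t s a - pis s a)\<^sup>2"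
        using ut2_le[OF t, of s] by (simp add: power_mult_distrib mult_right_mono)
      ultimately show ?thesis unfolding y1 using sq_add_le[of "w s * pis s a" "ut t s * (pit t s a - pis s a)"] by linarith
    qed
    have "Yf t \<le> (\<Sum>s\<in>UNIV. \<Sum>a\<in>UNIV. 2 * ((w s)\<^sup>2 * pis s a) + 2 * M2 * (pit t s a - pis s a)\<^sup>2)"
      unfolding Yf_def by (intro sum_mono pw)
    also have "\<dots> = 2 * (\<Sum>s\<in>UNIV. (w s)\<^sup>2 * (\<Sum>a\<in>UNIV. pis s a)) + 2 * M2 * Pd t"
      unfolding Pd_def by (simp only: sum.distrib sum_distrib_left[symmetric])
    also have "\<dots> = 2 * (\<Sum>s\<in>UNIV. (w s)\<^sup>2) + 2 * M2 * Pd t" by (simp add: pis_sum)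
    finally show ?thesis .
  qed
  have KTz: "KTy t j = z j + e j" for j
    unfolding KTy_def z_def e_def y1 by (simp only: distrib_left sum.distrib)
  have zform: "z j = w j - \<gamma> * (\<Sum>s\<in>UNIV. \<bar>w s\<bar> * 0 + w s * (\<Sum>a\<in>UNIV. pis s a * P a s j))" for j
  proof -
    have "z j = (\<Sum>s\<in>UNIV. \<Sum>a\<in>UNIV. (if s = j then w s * pis s a else 0) - \<gamma> * (w s * (pis s a * P a s j)))"
      unfolding z_def Kmat_split by (intro sum.cong refl) (simp add: algebra_simps)
    also have "\<dots> = (\<Sum>s\<in>UNIV. (if s = j then w s * (\<Sum>a\<in>UNIV. pis s a) else 0)) - \<gamma> * (\<Sum>s\<in>UNIV. w s * (\<Sum>a\<in>UNIV. pis s a * P a s j))"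
    proof -
      have d: "(\<Sum>a\<in>UNIV. (if s = j then w s * pis s a else 0)) = (if s = j then w s * (\<Sum>a\<in>UNIV. pis s a) else 0)" for s
        by (cases "s = j") (simp_all add: sum_distrib_left)
      have "(\<Sum>s\<in>UNIV. \<Sum>a\<in>UNIV. (if s = j then w s * pis s a else 0) - \<gamma> * (w s * (pis s a * P a s j)))
          = (\<Sum>s\<in>UNIV. \<Sum>a\<in>UNIV. (if s = j then w s * pis s a else 0)) - (\<Sum>s\<in>UNIV. \<Sum>a\<in>UNIV. \<gamma> * (w s * (pis s a * P a s j)))"
        by (simp only: sum_subtractf)
      also have "\<dots> = (\<Sum>s\<in>UNIV. (if s = j then w s * (\<Sum>a\<in>UNIV. pis s a) else 0)) - \<gamma> * (\<Sum>s\<in>UNIV. w s * (\<Sum>a\<in>UNIV. pis s a * P a s j))"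
        unfolding d by (simp only: sum_distrib_left)
      finally show ?thesis .
    qed
    also have "\<dots> = w j - \<gamma> * (\<Sum>s\<in>UNIV. w s * (\<Sum>a\<in>UNIV. pis s a * P a s j))"
      by (simp add: pis_sum)
    finally show ?thesis by simp
  qed
  define c where "c s j = (\<Sum>a\<in>UNIV. pis s a * P a s j)" for s j
  have c0: "c s j \<ge> 0" for s j unfolding c_def using pis_pos P_nonneg by (intro sum_nonneg) (simp add: less_imp_le)
  have c1: "(\<Sum>j\<in>UNIV. c s j) = 1" for s
  proof -
    have "(\<Sum>j\<in>UNIV. c s j) = (\<Sum>a\<in>UNIV. pis s a * (\<Sum>j\<in>UNIV. P a s j))"
      unfolding c_def by (simp add: sum_distrib_left) (rule sum.swap)
    also have "\<dots> = 1" using P_stoch pis_sum by simp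
    finally show ?thesis .
  qed
  have zj: "\<bar>w j\<bar> - \<gamma> * (\<Sum>s\<in>UNIV. \<bar>w s\<bar> * c s j) \<le> \<bar>z j\<bar>" for j
  proof -
    have "\<bar>\<Sum>s\<in>UNIV. w s * c s j\<bar> \<le> (\<Sum>s\<in>UNIV. \<bar>w s * c s j\<bar>)" by (rule sum_abs)
    also have "\<dots> = (\<Sum>s\<in>UNIV. \<bar>w s\<bar> * c s j)" using c0 by (simp add: abs_mult)
    finally have "\<bar>\<Sum>s\<in>UNIV. w s * c s j\<bar> \<le> (\<Sum>s\<in>UNIV. \<bar>w s\<bar> * c s j)" .
    moreover have "z j = w j - \<gamma> * (\<Sum>s\<in>UNIV. w s * c s j)" using zform[of j] unfolding c_def by simp
    ultimately have wz: "w j = z j + \<gamma> * (\<Sum>s\<in>UNIV. w s * c s j)" by simp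
    have "\<bar>w j\<bar> \<le> \<bar>z j\<bar> + \<bar>\<gamma> * (\<Sum>s\<in>UNIV. w s * c s j)\<bar>"
      unfolding wz by (rule abs_triangle_ineq)
    moreover have "\<bar>\<gamma> * (\<Sum>s\<in>UNIV. w s * c s j)\<bar> = \<gamma> * \<bar>\<Sum>s\<in>UNIV. w s * c s j\<bar>"
      using gamma0 by (simp add: abs_mult)
    moreover have "\<gamma> * \<bar>\<Sum>s\<in>UNIV. w s * c s j\<bar> \<le> \<gamma> * (\<Sum>s\<in>UNIV. \<bar>w s\<bar> * c s j)"
      using \<open>\<bar>\<Sum>s\<in>UNIV. w s * c s j\<bar> \<le> (\<Sum>s\<in>UNIV. \<bar>w s\<bar> * c s j)\<close> gamma0 by (intro mult_left_mono) auto
    ultimately show ?thesis by linarith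
  qed
  have L1: "(1 - \<gamma>) * (\<Sum>s\<in>UNIV. \<bar>w s\<bar>) \<le> (\<Sum>j\<in>UNIV. \<bar>z j\<bar>)"
  proof -
    have "(\<Sum>j\<in>UNIV. \<bar>w j\<bar> - \<gamma> * (\<Sum>s\<in>UNIV. \<bar>w s\<bar> * c s j)) \<le> (\<Sum>j\<in>UNIV. \<bar>z j\<bar>)"
      by (intro sum_mono zj)
    moreover have "(\<Sum>j\<in>UNIV. \<Sum>s\<in>UNIV. \<bar>w s\<bar> * c s j) = (\<Sum>s\<in>UNIV. \<bar>w s\<bar>)"
    proof -
      have "(\<Sum>j\<in>UNIV. \<Sum>s\<in>UNIV. \<bar>w s\<bar> * c s j) = (\<Sum>s\<in>UNIV. \<Sum>j\<in>UNIV. \<bar>w s\<bar> * c s j)" by (rule sum.swap)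
      also have "\<dots> = (\<Sum>s\<in>UNIV. \<bar>w s\<bar>)" by (simp add: sum_distrib_left[symmetric] c1)
      finally show ?thesis .
    qed
    moreover have "(\<Sum>j\<in>UNIV. \<bar>w j\<bar> - \<gamma> * (\<Sum>s\<in>UNIV. \<bar>w s\<bar> * c s j))
        = (\<Sum>j\<in>UNIV. \<bar>w j\<bar>) - \<gamma> * (\<Sum>j\<in>UNIV. \<Sum>s\<in>UNIV. \<bar>w s\<bar> * c s j)"
      by (simp only: sum_subtractf sum_distrib_left)
    ultimately show ?thesis by (simp add: algebra_simps)
  qed
  have g1: "1 - \<gamma> > 0" using gamma1 by simp
  have W2: "(\<Sum>s\<in>UNIV. (w s)\<^sup>2) \<le> NS * (\<Sum>j\<in>UNIV. (z j)\<^sup>2) / (1 - \<gamma>)\<^sup>2"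
  proof -
    have "((1 - \<gamma>) * (\<Sum>s\<in>UNIV. \<bar>w s\<bar>))\<^sup>2 \<le> (\<Sum>j\<in>UNIV. \<bar>z j\<bar>)\<^sup>2"
      using L1 g1 by (intro power_mono) (auto intro: sum_nonneg)
    also have "\<dots> \<le> NS * (\<Sum>j\<in>UNIV. (z j)\<^sup>2)" unfolding NS_def by (rule L1_sq1)
    finally have "(1 - \<gamma>)\<^sup>2 * (\<Sum>s\<in>UNIV. \<bar>w s\<bar>)\<^sup>2 \<le> NS * (\<Sum>j\<in>UNIV. (z j)\<^sup>2)"
      by (simp add: power_mult_distrib)
    then have "(\<Sum>s\<in>UNIV. \<bar>w s\<bar>)\<^sup>2 \<le> NS * (\<Sum>j\<in>UNIV. (z j)\<^sup>2) / (1 - \<gamma>)\<^sup>2"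
      using g1 by (simp add: field_simps)
    then show ?thesis using sq_le_sum_abs_sq[of w] by linarith
  qed
  have Z2: "(\<Sum>j\<in>UNIV. (z j)\<^sup>2) \<le> 2 * Gf t + 2 * (\<Sum>j\<in>UNIV. (e j)\<^sup>2)"
  proof -
    have "(z j)\<^sup>2 \<le> 2 * (KTy t j)\<^sup>2 + 2 * (e j)\<^sup>2" for j
      using sq_diff_le[of "KTy t j" "e j"] KTz[of j] by simp
    then have "(\<Sum>j\<in>UNIV. (z j)\<^sup>2) \<le> (\<Sum>j\<in>UNIV. 2 * (KTy t j)\<^sup>2 + 2 * (e j)\<^sup>2)" by (rule sum_mono)
    then show ?thesis unfolding Gf_def by (simp add: sum.distrib sum_distrib_left)
  qed
  have E2: "(\<Sum>j\<in>UNIV. (e j)\<^sup>2) \<le> CK1 * (M2 * Pd t)"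
  proof -
    have "(e j)\<^sup>2 \<le> (\<Sum>s\<in>UNIV. \<Sum>a\<in>UNIV. (K a s j)\<^sup>2) * (\<Sum>s\<in>UNIV. \<Sum>a\<in>UNIV. (ut t s * (pit t s a - pis s a))\<^sup>2)" for j
      unfolding e_def by (rule CS2)
    then have "(\<Sum>j\<in>UNIV. (e j)\<^sup>2) \<le> CK1 * (\<Sum>s\<in>UNIV. \<Sum>a\<in>UNIV. (ut t s * (pit t s a - pis s a))\<^sup>2)"
      using sum_mono[of UNIV "\<lambda>j. (e j)\<^sup>2"] unfolding CK1_def by (simp add: sum_distrib_right)
    also have "\<dots> \<le> CK1 * (M2 * Pd t)"
    proof (rule mult_left_mono[OF _ CK_nonneg(1)])
      have "(\<Sum>s\<in>UNIV. \<Sum>a\<in>UNIV. (ut t s * (pit t s a - pis s a))\<^sup>2) \<le> (\<Sum>s\<in>UNIV. \<Sum>a\<in>UNIV. M2 * (pit t s a - pis s a)\<^sup>2)"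
        using ut2_le[OF t] by (intro sum_mono) (simp add: power_mult_distrib mult_right_mono)
      then show "(\<Sum>s\<in>UNIV. \<Sum>a\<in>UNIV. (ut t s * (pit t s a - pis s a))\<^sup>2) \<le> M2 * Pd t"
        unfolding Pd_def by (simp add: sum_distrib_left)
    qed
    finally show ?thesis .
  qed
  have NS0: "NS \<ge> 0" unfolding NS_def by simp
  have M20: "M2 \<ge> 0" unfolding M2_def by simp
  have G0: "Gf t \<ge> 0" unfolding Gf_def by (simp add: sum_nonneg)
  have P0: "Pd t \<ge> 0" unfolding Pd_def by (simp add: sum_nonneg)
  have "(\<Sum>s\<in>UNIV. (w s)\<^sup>2) \<le> NS * (2 * Gf t + 2 * (CK1 * (M2 * Pd t))) / (1 - \<gamma>)\<^sup>2"
  proof -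
    have "NS * (\<Sum>j\<in>UNIV. (z j)\<^sup>2) \<le> NS * (2 * Gf t + 2 * (CK1 * (M2 * Pd t)))"
      using Z2 E2 NS0 by (intro mult_left_mono) auto
    then have "NS * (\<Sum>j\<in>UNIV. (z j)\<^sup>2) / (1 - \<gamma>)\<^sup>2 \<le> NS * (2 * Gf t + 2 * (CK1 * (M2 * Pd t))) / (1 - \<gamma>)\<^sup>2"
      by (rule divide_right_mono) simp
    then show ?thesis using W2 by linarith
  qed
  also have "\<dots> \<le> 2 * NS / (1 - \<gamma>)\<^sup>2 * (1 + CK1 * M2) * (Gf t + Pd t)"
  proof -
    have "NS * (2 * Gf t + 2 * (CK1 * (M2 * Pd t))) \<le> 2 * NS * (1 + CK1 * M2) * (Gf t + Pd t)"
    proof -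
      have "2 * Gf t + 2 * (CK1 * (M2 * Pd t)) \<le> 2 * (1 + CK1 * M2) * (Gf t + Pd t)"
        using G0 P0 CK_nonneg(1) M20 by (simp add: algebra_simps add_increasing mult_nonneg_nonneg)
      from mult_left_mono[OF this NS0] show ?thesis by (simp add: algebra_simps)
    qed
    then have "NS * (2 * Gf t + 2 * (CK1 * (M2 * Pd t))) / (1 - \<gamma>)\<^sup>2 \<le> 2 * NS * (1 + CK1 * M2) * (Gf t + Pd t) / (1 - \<gamma>)\<^sup>2"
      by (rule divide_right_mono) simp
    also have "\<dots> = 2 * NS / (1 - \<gamma>)\<^sup>2 * (1 + CK1 * M2) * (Gf t + Pd t)" by simp
    finally show ?thesis .
  qed
  finally have W3: "(\<Sum>s\<in>UNIV. (w s)\<^sup>2) \<le> 2 * NS / (1 - \<gamma>)\<^sup>2 * (1 + CK1 * M2) * (Gf t + Pd t)" .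
  have "Yf t \<le> 2 * (2 * NS / (1 - \<gamma>)\<^sup>2 * (1 + CK1 * M2) * (Gf t + Pd t)) + 2 * M2 * Pd t"
    using Y1 W3 by linarith
  also have "\<dots> \<le> C4 * (Gf t + Pd t)"
    unfolding C4_def using G0 M20 by (simp add: algebra_simps)
  finally show ?thesis .
qed


lemma C4_pos: "C4 > 0"
proof -
  have "M2 > 0" unfolding M2_def using NA_pos Mu_pos by simp
  moreover have "4 * NS / (1 - \<gamma>)\<^sup>2 * (1 + CK1 * M2) \<ge> 0"
    unfolding NS_def using CK_nonneg(1) \<open>M2 > 0\<close> by (intro mult_nonneg_nonneg divide_nonneg_nonneg) auto
  ultimately show ?thesis unfolding C4_def by simp
qed

lemma Zd_val: "(\<Sum>j\<in>UNIV. dx t j * KTy t j + KTdu t j * x t j)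
   = - (\<Sum>j\<in>UNIV. x t j * KTy t j) + Gf t / \<alpha> + (\<Sum>j\<in>UNIV. x t j * KTdu t j)"
proof -
  have "(\<Sum>j\<in>UNIV. dx t j * KTy t j + KTdu t j * x t j)
      = (\<Sum>j\<in>UNIV. - (x t j * KTy t j) + (KTy t j)\<^sup>2 / \<alpha> + x t j * KTdu t j)"
    unfolding dx_def by (intro sum.cong refl) (simp add: algebra_simps power2_eq_square)
  also have "\<dots> = - (\<Sum>j\<in>UNIV. x t j * KTy t j) + Gf t / \<alpha> + (\<Sum>j\<in>UNIV. x t j * KTdu t j)"
    unfolding Gf_def by (simp only: sum.distrib sum_negf sum_divide_distrib[symmetric])
  finally show ?thesis .
qed

lemma decay: "\<exists>C c. c > 0 \<and> (\<forall>t\<ge>0.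
           (\<Sum>s\<in>UNIV. \<bar>v t s - vs s\<bar>) + (\<Sum>s\<in>UNIV. \<Sum>a\<in>UNIV. \<bar>u t s a - us s a\<bar>)
             \<le> C * exp (- c * t))"
proof -
  define cD where "cD = mu / 4"
  have cD0: "cD > 0" unfolding cD_def using mu0 by simp
  have Dl: "cD * Pd t \<le> Dd t" if "t \<ge> 0" for t
    unfolding cD_def using D_lower[OF that, of mu] ust_ge mu0 by auto
  define C1 where "C1 = 2 * CK1 * Mu\<^sup>2 * (1 / pm\<^sup>2 + CK2 / \<tau>\<^sup>2)"
  have C10: "C1 \<ge> 0" unfolding C1_def using CK_nonneg by simp
  have KTdu_C1: "(\<Sum>j\<in>UNIV. (KTdu t j)\<^sup>2) \<le> C1 * (Xf t + Pd t)" if t: "t \<ge> 0" for t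
  proof -
    have X0: "Xf t \<ge> 0" unfolding Xf_def by (simp add: sum_nonneg)
    have P0: "Pd t \<ge> 0" unfolding Pd_def by (simp add: sum_nonneg)
    have "(\<Sum>j\<in>UNIV. (KTdu t j)\<^sup>2) \<le> CK1 * (2 * Mu\<^sup>2 * (Pd t / pm\<^sup>2 + CK2 * Xf t / \<tau>\<^sup>2))"
      using KTdu_le[of t] mult_left_mono[OF du_sq[OF t] CK_nonneg(1)] by linarith
    also have "\<dots> = 2 * CK1 * Mu\<^sup>2 * ((1 / pm\<^sup>2) * Pd t + (CK2 / \<tau>\<^sup>2) * Xf t)" by (simp add: algebra_simps)
    also have "\<dots> \<le> 2 * CK1 * Mu\<^sup>2 * ((1 / pm\<^sup>2 + CK2 / \<tau>\<^sup>2) * (Xf t + Pd t))"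
    proof (rule mult_left_mono)
      have "(1 / pm\<^sup>2) * Pd t \<le> (1 / pm\<^sup>2) * (Xf t + Pd t)" using X0 by (intro mult_left_mono) auto
      moreover have "(CK2 / \<tau>\<^sup>2) * Xf t \<le> (CK2 / \<tau>\<^sup>2) * (Xf t + Pd t)" using P0 CK_nonneg by (intro mult_left_mono) auto
      ultimately show "(1 / pm\<^sup>2) * Pd t + (CK2 / \<tau>\<^sup>2) * Xf t \<le> (1 / pm\<^sup>2 + CK2 / \<tau>\<^sup>2) * (Xf t + Pd t)"
        by (simp add: distrib_right)
    qed (use CK_nonneg in simp)
    finally show ?thesis unfolding C1_def by (simp add: mult.assoc)
  qed
  define \<epsilon> where "\<epsilon> = min 1 (min (\<alpha> / (2 * (1 + C1))) (min (\<tau> * cD / (1 + C1)) (min (\<alpha> / 2) (\<tau> / (4 * Mu * (1 + CK1))))))"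
  have e0: "\<epsilon> > 0" unfolding \<epsilon>_def using alpha tau cD0 C10 Mu_pos CK_nonneg by auto
  have e1: "\<epsilon> \<le> 1" unfolding \<epsilon>_def by simp
  have e2: "\<epsilon> * (1 + C1) \<le> \<alpha> / 2"
  proof -
    have "\<epsilon> \<le> \<alpha> / (2 * (1 + C1))" unfolding \<epsilon>_def by simp
    then show ?thesis using C10 by (simp add: field_simps)
  qed
  have e3: "\<epsilon> * C1 \<le> \<tau> * cD"
  proof -
    have "\<epsilon> \<le> \<tau> * cD / (1 + C1)" unfolding \<epsilon>_def by simp
    then have "\<epsilon> * (1 + C1) \<le> \<tau> * cD" using C10 by (simp add: field_simps)
    then show ?thesis using e0 by (simp add: algebra_simps)
  qed
  have e4: "\<epsilon> \<le> \<alpha> / 2" unfolding \<epsilon>_def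
    by (rule min.coboundedI2, rule min.coboundedI2, rule min.coboundedI2, rule min.cobounded1)
  have e5: "\<epsilon> * CK1 \<le> \<tau> / (4 * Mu)"
  proof -
    have "\<epsilon> \<le> \<tau> / (4 * Mu * (1 + CK1))" unfolding \<epsilon>_def by simp
    moreover have D0: "4 * Mu * (1 + CK1) > 0" using CK_nonneg Mu_pos by simp
    ultimately have "\<epsilon> * (4 * Mu * (1 + CK1)) \<le> \<tau>" by (simp add: pos_le_divide_eq)
    moreover have "(\<epsilon> * CK1) * (4 * Mu) \<le> \<epsilon> * (4 * Mu * (1 + CK1))"
      using e0 Mu_pos by (simp add: algebra_simps)
    ultimately have "(\<epsilon> * CK1) * (4 * Mu) \<le> \<tau>" by linarith
    then show ?thesis using Mu_pos by (simp add: pos_le_divide_eq)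
  qed
  define V where "V t = Wf t - \<epsilon> * Zf t" for t
  define c8 where "c8 = min (\<alpha> / 4) (\<tau> / (8 * Mu))"
  have c80: "c8 > 0" unfolding c8_def using alpha tau Mu_pos by simp
  define C7 where "C7 = \<alpha> / 2 + 1 / 2 + \<tau> / mu + CK1 / 2"
  have C70: "C7 > 0" unfolding C7_def using alpha tau mu0 CK_nonneg by (simp add: add_pos_nonneg)
  define \<kappa> where "\<kappa> = min (\<alpha> / 4) (min (\<tau> * cD / 2) (\<epsilon> / (2 * \<alpha>)))"
  have k0: "\<kappa> > 0" unfolding \<kappa>_def using alpha tau cD0 e0 by simp
  define \<kappa>2 where "\<kappa>2 = \<kappa> * min 1 (1 / C4)"
  have k20: "\<kappa>2 > 0" unfolding \<kappa>2_def using k0 C4_pos by simp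
  define c where "c = \<kappa>2 / C7"
  have c0: "c > 0" unfolding c_def using k20 C70 by simp
  have X0: "Xf t \<ge> 0" for t unfolding Xf_def by (simp add: sum_nonneg)
  have Y0: "Yf t \<ge> 0" for t unfolding Yf_def by (simp add: sum_nonneg)
  have G0: "Gf t \<ge> 0" for t unfolding Gf_def by (simp add: sum_nonneg)
  have P0: "Pd t \<ge> 0" for t unfolding Pd_def by (simp add: sum_nonneg)
  have V_up: "V t \<le> C7 * (Xf t + Yf t)" if t: "t \<ge> 0" for t
  proof -
    have "\<tau> * Hf t \<le> \<tau> * (Yf t / mu)" using H_upper[OF t] tau by (intro mult_left_mono) auto
    moreover have "- (\<epsilon> * Zf t) \<le> (Xf t + Gf t) / 2"
    proof -
      have "- (\<epsilon> * Zf t) \<le> \<epsilon> * \<bar>Zf t\<bar>" using e0 by (simp add: abs_if)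
      also have "\<dots> \<le> 1 * ((Xf t + Gf t) / 2)" using e1 e0 Z_abs[of t] X0[of t] G0[of t] by (intro mult_mono) auto
      finally show ?thesis by simp
    qed
    moreover have "(Xf t + Gf t) / 2 \<le> (Xf t + CK1 * Yf t) / 2" using G_le[of t] by simp
    ultimately have "\<alpha> / 2 * Xf t + \<tau> * Hf t - \<epsilon> * Zf t \<le> \<alpha> / 2 * Xf t + \<tau> * (Yf t / mu) + (Xf t + CK1 * Yf t) / 2"
      by linarith
    then have "V t \<le> \<alpha> / 2 * Xf t + \<tau> * (Yf t / mu) + (Xf t + CK1 * Yf t) / 2"
      unfolding V_def Wf_def .
    also have "\<dots> = (\<alpha> / 2 + 1 / 2) * Xf t + (\<tau> / mu + CK1 / 2) * Yf t" by (simp add: algebra_simps)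
    also have "\<dots> \<le> C7 * Xf t + C7 * Yf t"
    proof -
      have "\<alpha> / 2 + 1 / 2 \<le> C7" unfolding C7_def using tau mu0 CK_nonneg by simp
      then have 1: "(\<alpha> / 2 + 1 / 2) * Xf t \<le> C7 * Xf t" using X0[of t] by (rule mult_right_mono)
      have "\<tau> / mu + CK1 / 2 \<le> C7" unfolding C7_def using alpha by simp
      then have 2: "(\<tau> / mu + CK1 / 2) * Yf t \<le> C7 * Yf t" using Y0[of t] by (rule mult_right_mono)
      show ?thesis using 1 2 by linarith
    qed
    finally show ?thesis by (simp add: algebra_simps)
  qed
  have V_low: "c8 * (Xf t + Yf t) \<le> V t" if t: "t \<ge> 0" for t
  proof -
    have "\<tau> * (Yf t / (4 * Mu)) \<le> \<tau> * Hf t"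
      using H_lower[OF t] tau Mu_pos by (simp add: field_simps)
    moreover have "\<epsilon> * Zf t \<le> \<epsilon> * ((Xf t + Gf t) / 2)"
      using Z_abs[of t] e0 by (intro mult_left_mono) auto
    moreover have "\<epsilon> * Gf t \<le> \<epsilon> * (CK1 * Yf t)" using G_le[of t] e0 by (intro mult_left_mono) auto
    moreover have "\<epsilon> * Xf t \<le> \<alpha> / 2 * Xf t" using e4 X0[of t] by (intro mult_right_mono) auto
    moreover have "\<epsilon> * CK1 * Yf t \<le> \<tau> / (4 * Mu) * Yf t" using e5 Y0[of t] by (intro mult_right_mono) auto
    ultimately have "\<alpha> / 4 * Xf t + \<tau> / (8 * Mu) * Yf t \<le> V t"
      unfolding V_def Wf_def by (simp add: field_simps)
    moreover have "c8 * Xf t \<le> \<alpha> / 4 * Xf t" unfolding c8_def using X0[of t] by (intro mult_right_mono) auto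
    moreover have "c8 * Yf t \<le> \<tau> / (8 * Mu) * Yf t" unfolding c8_def using Y0[of t] by (intro mult_right_mono) auto
    ultimately show ?thesis by (simp add: algebra_simps)
  qed
  define V' where "V' t = - \<alpha> * Xf t - \<tau> * Dd t - \<epsilon> * (\<Sum>j\<in>UNIV. dx t j * KTy t j + KTdu t j * x t j)" for t
  have V_deriv: "(V has_real_derivative V' t) (at t within {0..})" if t: "t \<ge> 0" for t
    unfolding V_def[abs_def] V'_def by (intro DERIV_diff DERIV_cmult W_deriv[OF t] Z_deriv[OF t])
  have V'_le: "V' t \<le> - c * V t" if t: "t \<ge> 0" for t
  proof -
    have a: "\<epsilon> * (\<Sum>j\<in>UNIV. x t j * KTy t j) \<le> \<epsilon> * (\<alpha> / 2 * Xf t + Gf t / (2 * \<alpha>))"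
      using xKTy_le[of t] e0 by (intro mult_left_mono) auto
    have b: "\<epsilon> * (- (\<Sum>j\<in>UNIV. x t j * KTdu t j)) \<le> \<epsilon> * ((Xf t + C1 * (Xf t + Pd t)) / 2)"
      using xKTdu_le[of t] KTdu_C1[OF t] e0 by (intro mult_left_mono) auto
    have d: "\<tau> * (cD * Pd t) \<le> \<tau> * Dd t" using Dl[OF t] tau by simp
    have "V' t = - \<alpha> * Xf t - \<tau> * Dd t + \<epsilon> * (\<Sum>j\<in>UNIV. x t j * KTy t j) - \<epsilon> * (Gf t / \<alpha>)
        + \<epsilon> * (- (\<Sum>j\<in>UNIV. x t j * KTdu t j))"
      unfolding V'_def Zd_val by (simp add: algebra_simps)
    also have "\<dots> \<le> - \<alpha> * Xf t - \<tau> * (cD * Pd t) + \<epsilon> * (\<alpha> / 2 * Xf t + Gf t / (2 * \<alpha>)) - \<epsilon> * (Gf t / \<alpha>)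
        + \<epsilon> * ((Xf t + C1 * (Xf t + Pd t)) / 2)"
      using a b d by linarith
    also have "\<dots> = - (\<alpha> - \<epsilon> * \<alpha> / 2 - \<epsilon> * (1 + C1) / 2) * Xf t - (\<tau> * cD - \<epsilon> * C1 / 2) * Pd t
        - \<epsilon> / (2 * \<alpha>) * Gf t"
      using alpha by (simp add: field_simps)
    also have "\<dots> \<le> - (\<alpha> / 4) * Xf t - (\<tau> * cD / 2) * Pd t - \<epsilon> / (2 * \<alpha>) * Gf t"
    proof -
      have "\<epsilon> * \<alpha> / 2 \<le> \<alpha> / 2" using e1 alpha by (simp add: mult_left_le_one_le)
      then have "\<alpha> / 4 \<le> \<alpha> - \<epsilon> * \<alpha> / 2 - \<epsilon> * (1 + C1) / 2" using e2 by linarith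
      then have 1: "(\<alpha> / 4) * Xf t \<le> (\<alpha> - \<epsilon> * \<alpha> / 2 - \<epsilon> * (1 + C1) / 2) * Xf t"
        using X0[of t] by (intro mult_right_mono) auto
      have "\<tau> * cD / 2 \<le> \<tau> * cD - \<epsilon> * C1 / 2" using e3 by linarith
      then have 2: "(\<tau> * cD / 2) * Pd t \<le> (\<tau> * cD - \<epsilon> * C1 / 2) * Pd t"
        using P0[of t] by (intro mult_right_mono) auto
      show ?thesis using 1 2 by linarith
    qed
    also have "\<dots> \<le> - \<kappa> * (Xf t + (Pd t + Gf t))"
    proof -
      have "\<kappa> * Xf t \<le> (\<alpha> / 4) * Xf t" unfolding \<kappa>_def using X0[of t] by (intro mult_right_mono) auto
      moreover have "\<kappa> * Pd t \<le> (\<tau> * cD / 2) * Pd t" unfolding \<kappa>_def using P0[of t] by (intro mult_right_mono) auto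
      moreover have "\<kappa> * Gf t \<le> \<epsilon> / (2 * \<alpha>) * Gf t" unfolding \<kappa>_def using G0[of t] by (intro mult_right_mono) auto
      ultimately show ?thesis by (simp add: algebra_simps)
    qed
    also have "\<dots> \<le> - \<kappa>2 * (Xf t + Yf t)"
    proof -
      have "Yf t / C4 \<le> Gf t + Pd t" using Y_le[OF t] C4_pos by (simp add: field_simps)
      have "min 1 (1 / C4) * Yf t \<le> (1 / C4) * Yf t" using Y0[of t] C4_pos by (intro mult_right_mono) auto
      also have "\<dots> \<le> Pd t + Gf t" using \<open>Yf t / C4 \<le> Gf t + Pd t\<close> by simp
      finally have y: "min 1 (1 / C4) * Yf t \<le> Pd t + Gf t" .
      have x: "min 1 (1 / C4) * Xf t \<le> Xf t" using X0[of t] C4_pos by (intro mult_left_le_one_le) auto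
      have "min 1 (1 / C4) * (Xf t + Yf t) \<le> Xf t + (Pd t + Gf t)" using x y by (simp add: algebra_simps)
      then have "\<kappa> * (min 1 (1 / C4) * (Xf t + Yf t)) \<le> \<kappa> * (Xf t + (Pd t + Gf t))"
        using k0 by (intro mult_left_mono) auto
      then show ?thesis unfolding \<kappa>2_def by (simp add: algebra_simps)
    qed
    also have "\<dots> \<le> - c * V t"
    proof -
      have "c * V t \<le> c * (C7 * (Xf t + Yf t))" using V_up[OF t] c0 by (intro mult_left_mono) auto
      also have "\<dots> = \<kappa>2 * (Xf t + Yf t)" unfolding c_def using C70 by simp
      finally show ?thesis by simp
    qed
    finally show ?thesis .
  qed
  have Vexp: "V t \<le> V 0 * exp (- c * t)" if t: "t \<ge> 0" for t
  proof -
    define g where "g t = V t * exp (c * t)" for t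
    have gd: "(g has_real_derivative (V' t * exp (c * t) + (exp (c * t) * c) * V t)) (at t within {0..})" if "t \<ge> 0" for t
    proof -
      have "((\<lambda>t. exp (c * t)) has_real_derivative exp (c * t) * (c * 1)) (at t within {0..})"
        by (intro DERIV_chain2[OF DERIV_exp] DERIV_cmult DERIV_ident)
      then show ?thesis unfolding g_def using DERIV_mult[OF V_deriv[OF that]] by simp
    qed
    have "g t \<le> g 0"
    proof (rule mono_within0[OF gd])
      fix t :: real assume "t \<ge> 0"
      then have "V' t + c * V t \<le> 0" using V'_le by fastforce
      then have "(V' t + c * V t) * exp (c * t) \<le> 0" by (simp add: mult_nonpos_nonneg)
      then show "V' t * exp (c * t) + exp (c * t) * c * V t \<le> 0" by (simp add: algebra_simps)
    qed (use t in auto)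
    then have "V t * exp (c * t) \<le> V 0" unfolding g_def by simp
    then have p: "V t * exp (c * t) * exp (- c * t) \<le> V 0 * exp (- c * t)" by (intro mult_right_mono) auto
    have "exp (c * t) * exp (- c * t) = 1" by (simp add: exp_add[symmetric])
    then have "V t * exp (c * t) * exp (- c * t) = V t" by (simp add: mult.assoc)
    then show ?thesis using p by linarith
  qed
  define N where "N = real CARD('S) * real CARD('A) + real CARD('S)"
  have N0: "N \<ge> 0" unfolding N_def by simp
  have V00: "V 0 \<ge> 0" using V_low[of 0] c80 X0[of 0] Y0[of 0] by (smt (verit) mult_nonneg_nonneg)
  define C where "C = sqrt (2 * N * V 0 / c8)"
  have "(\<Sum>s\<in>UNIV. \<bar>v t s - vs s\<bar>) + (\<Sum>s\<in>UNIV. \<Sum>a\<in>UNIV. \<bar>u t s a - us s a\<bar>) \<le> C * exp (- (c / 2) * t)"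
    if t: "t \<ge> 0" for t
  proof -
    define L1 where "L1 = (\<Sum>s\<in>UNIV. \<bar>x t s\<bar>)"
    define L2 where "L2 = (\<Sum>s\<in>UNIV. \<Sum>a\<in>UNIV. \<bar>y t s a\<bar>)"
    have "L1\<^sup>2 \<le> real CARD('S) * Xf t" unfolding L1_def Xf_def by (rule L1_sq1)
    also have "\<dots> \<le> N * Xf t" unfolding N_def using X0[of t] by (intro mult_right_mono) auto
    finally have l1: "L1\<^sup>2 \<le> N * Xf t" .
    have "L2\<^sup>2 \<le> real (CARD('S) * CARD('A)) * Yf t" unfolding L2_def Yf_def by (rule L1_sq2)
    also have "\<dots> \<le> N * Yf t" unfolding N_def using Y0[of t] by (intro mult_right_mono) auto
    finally have l2: "L2\<^sup>2 \<le> N * Yf t" .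
    have "(L1 + L2)\<^sup>2 \<le> 2 * L1\<^sup>2 + 2 * L2\<^sup>2" by (rule sq_add_le)
    also have "\<dots> \<le> 2 * N * (Xf t + Yf t)" using l1 l2 by (simp add: algebra_simps)
    also have "\<dots> \<le> 2 * N * (V t / c8)"
    proof -
      have "Xf t + Yf t \<le> V t / c8" using V_low[OF t] c80 by (simp add: field_simps)
      then show ?thesis using N0 by (intro mult_left_mono) auto
    qed
    also have "\<dots> \<le> 2 * N * (V 0 * exp (- c * t) / c8)"
      using Vexp[OF t] N0 c80 by (intro mult_left_mono divide_right_mono) auto
    also have "\<dots> = (C * exp (- (c / 2) * t))\<^sup>2"
    proof -
      have "(exp (- (c / 2) * t))\<^sup>2 = exp (- c * t)" by (simp add: power2_eq_square exp_add[symmetric])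
      moreover have "C\<^sup>2 = 2 * N * V 0 / c8" unfolding C_def using N0 V00 c80 by simp
      ultimately show ?thesis by (simp add: power_mult_distrib)
    qed
    finally have "(L1 + L2)\<^sup>2 \<le> (C * exp (- (c / 2) * t))\<^sup>2" .
    moreover have "C * exp (- (c / 2) * t) \<ge> 0" unfolding C_def using N0 V00 c80 by (intro mult_nonneg_nonneg) auto
    ultimately have "L1 + L2 \<le> C * exp (- (c / 2) * t)" using power2_le_imp_le by blast
    then show ?thesis unfolding L1_def L2_def x_def y_def .
  qed
  moreover have "c / 2 > 0" using c0 by simp
  ultimately show ?thesis by blast
qed

end
end

theorem theorem2p5:
  fixes P :: "'A::finite \<Rightarrow> 'S::finite \<Rightarrow> 'S \<Rightarrow> real"
    and r :: "'S \<Rightarrow> 'A \<Rightarrow> real"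
    and \<gamma> \<tau> \<alpha> :: real
    and vs :: "'S \<Rightarrow> real" and us :: "'S \<Rightarrow> 'A \<Rightarrow> real"
    and v :: "real \<Rightarrow> 'S \<Rightarrow> real" and u :: "real \<Rightarrow> 'S \<Rightarrow> 'A \<Rightarrow> real"
  assumes P_nonneg: "\<forall>a s s'. P a s s' \<ge> 0"
    and P_stoch: "\<forall>a s. (\<Sum>s'\<in>UNIV. P a s s') = 1"
    and r_nonneg: "\<forall>s a. r s a \<ge> 0"
    and gamma: "0 < \<gamma>" "\<gamma> < 1"
    and tau: "\<tau> > 0"
    and alpha: "\<alpha> > 0"
    and saddle: "is_saddle \<alpha> \<tau> \<gamma> P r vs us"
    and u_pos: "\<forall>t\<ge>0. \<forall>s a. u t s a > 0"
    and v_ode: "\<forall>t\<ge>0. \<forall>s'. ((\<lambda>t. v t s') has_real_derivative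
          (- (v t s' - (1 / \<alpha>) * (\<Sum>s\<in>UNIV. \<Sum>a\<in>UNIV. Kmat \<gamma> P a s s' * u t s a))))
          (at t within {0..})"
    and u_ode: "\<forall>t\<ge>0. \<forall>s a. ((\<lambda>t. u t s a) has_real_derivative
          (- u t s a * (ln (u t s a / utilde (u t) s)
              - (1 / \<tau>) * (r s a - (\<Sum>s'\<in>UNIV. Kmat \<gamma> P a s s' * v t s')))))
          (at t within {0..})"
  shows "\<exists>C c. c > 0 \<and> (\<forall>t\<ge>0.
           (\<Sum>s\<in>UNIV. \<bar>v t s - vs s\<bar>) + (\<Sum>s\<in>UNIV. \<Sum>a\<in>UNIV. \<bar>u t s a - us s a\<bar>)
             \<le> C * exp (- c * t))"
proof -
  interpret flow P r \<gamma> \<tau> \<alpha> vs us v u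
    using P_nonneg P_stoch gamma tau alpha saddle u_pos v_ode u_ode by unfold_locales auto
  obtain mu Mu where mu0: "mu > 0"
    and bnd: "\<forall>s a. mu \<le> us s a \<and> us s a \<le> Mu \<and> (\<forall>t\<ge>0. mu \<le> u t s a \<and> u t s a \<le> Mu)"
    using bounds by blast
  show ?thesis using decay[OF mu0 bnd] .
qed

end
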